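(* Let $\mathbf C$ be an admissible category of frames, or an admissible category of coframes. Then $\mathbf{Conv}$ is a coreflective subcategory of $(\mathbf C^{\mathrm{conv}})^{op}$ through the coreflection $\mathrm{pt}$: the functor $\mathbb P:\mathbf{Conv}\to(\mathbf C^{\mathrm{conv}})^{op}$ is fully faithful and has right adjoint $\mathrm{pt}$.
   Context: An inf-semilattice is a poset with all finite infima. A filter on an inf-semilattice $L$ is a non-empty upward-closed subset closed under binary meets ($L$ itself is allowed). $\mathbb F L$ is the set of filters on $L$ ordered by inclusion. $\mathbb P(X)$ is the powerset of a set $X$. A category of frames (resp. coframes) has frames (resp. coframes) as objects and frame (resp. coframe) morphisms as morphisms; a coframe is a complete lattice where arbitrary infima distribute over binary suprema, and coframe morphisms preserve all infima and finite suprema. Such a category $\mathbf C$ is admissible if $\mathbb P(X)$ is a $\mathbf C$-object for every set $X$ and there are classes of index sets $\mathcal I,\mathcal J$ such that the $\mathbf C$-morphisms $L\to L'$ are exactly the monotone maps preserving all existing $I$-indexed infima ($I\in\mathcal I$) and $J$-indexed suprema ($J\in\mathcal J$). A convergence $\mathbf C$-object is a $\mathbf C$-object $L$ with a monotone map $\lim_L:\mathbb F L\to L$; $\mathbf C^{\mathrm{conv}}$ has as morphisms $\varphi:L\to L'$ the $\mathbf C$-morphisms with $\lim_{L'}\mathcal F\le\varphi(\lim_L\varphi^{-1}(\mathcal F))$ for all $\mathcal F\in\mathbb F L'$. A convergence space is a set $X$ with a relation $\to$ between filters of subsets of $X$ and points, such that $\{S: x\in S\}\to x$ and $\mathcal F\to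 x$, $\mathcal F\subseteq\mathcal G$ imply $\mathcal G\to x$; continuous maps $f$ satisfy $\mathcal F\to x\Rightarrow f[\mathcal F]\to f(x)$ with $f[\mathcal F]=\{B: f^{-1}(B)\in\mathcal F\}$; category $\mathbf{Conv}$. $\mathbb P(X)$ carries $\lim\mathcal F=\{x:\mathcal F\to x\}$, $\mathbb P(f)=f^{-1}$. With $\mathbb P(1)=\{\emptyset,\{*\}\}$ and $\lim_{\mathbb P(1)}$ constantly $\{*\}$, $\mathrm{pt}\,L$ is the set of morphisms $L\to\mathbb P(1)$ in $\mathbf C^{\mathrm{conv}}$, with $\ell^\bullet=\{\varphi:\varphi(\ell)=\{*\}\}$, $\mathcal F^\circ=\{\ell:\ell^\bullet\in\mathcal F\}$, and convergence $\mathcal F\to\varphi$ iff $\varphi\in(\lim_L\mathcal F^\circ)^\bullet$; $\mathrm{pt}\,\varphi(\psi)=\psi\circ\varphi$. *)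

theory Defs
  imports Main "HOL-Algebra.Complete_Lattice"
begin

definition is_frame :: "('a, 'c) gorder_scheme \<Rightarrow> bool" where
  "is_frame L \<equiv> complete_lattice L \<and>
     (\<forall>a\<in>carrier L. \<forall>S. S \<subseteq> carrier L \<longrightarrow>
        a \<sqinter>\<^bsub>L\<^esub> (\<Squnion>\<^bsub>L\<^esub> S) = \<Squnion>\<^bsub>L\<^esub> ((\<lambda>s. a \<sqinter>\<^bsub>L\<^esub> s) ` S))"

definition is_coframe :: "('a, 'c) gorder_scheme \<Rightarrow> bool" where
  "is_coframe L \<equiv> complete_lattice L \<and>
     (\<forall>a\<in>carrier L. \<forall>S. S \<subseteq> carrier L \<longrightarrow>
        a \<squnion>\<^bsub>L\<^esub> (\<Sqinter>\<^bsub>L\<^esub> S) = \<Sqinter>\<^bsub>L\<^esub> ((\<lambda>s. a \<squnion>\<^bsub>L\<^esub> s) ` S))"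

definition C_obj :: "bool \<Rightarrow> ('a, 'c) gorder_scheme \<Rightarrow> bool" where
  "C_obj fr L \<equiv> (if fr then is_frame L else is_coframe L)"

definition PowL :: "'x set \<Rightarrow> 'x set gorder" where
  "PowL X = \<lparr>carrier = Pow X, eq = (=), le = (\<subseteq>)\<rparr>"

definition frame_hom :: "('a, 'c) gorder_scheme \<Rightarrow> ('b, 'd) gorder_scheme \<Rightarrow> ('a \<Rightarrow> 'b) \<Rightarrow> bool" where
  "frame_hom L L' \<phi> \<equiv> \<phi> (\<Sqinter>\<^bsub>L\<^esub> {}) = \<Sqinter>\<^bsub>L'\<^esub> {} \<and>
     (\<forall>x\<in>carrier L. \<forall>y\<in>carrier L. \<phi> (x \<sqinter>\<^bsub>L\<^esub> y) = \<phi> x \<sqinter>\<^bsub>L'\<^esub> \<phi> y) \<and>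
     (\<forall>S. S \<subseteq> carrier L \<longrightarrow> \<phi> (\<Squnion>\<^bsub>L\<^esub> S) = \<Squnion>\<^bsub>L'\<^esub> (\<phi> ` S))"

definition coframe_hom :: "('a, 'c) gorder_scheme \<Rightarrow> ('b, 'd) gorder_scheme \<Rightarrow> ('a \<Rightarrow> 'b) \<Rightarrow> bool" where
  "coframe_hom L L' \<phi> \<equiv> \<phi> (\<Squnion>\<^bsub>L\<^esub> {}) = \<Squnion>\<^bsub>L'\<^esub> {} \<and>
     (\<forall>x\<in>carrier L. \<forall>y\<in>carrier L. \<phi> (x \<squnion>\<^bsub>L\<^esub> y) = \<phi> x \<squnion>\<^bsub>L'\<^esub> \<phi> y) \<and>
     (\<forall>S. S \<subseteq> carrier L \<longrightarrow> \<phi> (\<Sqinter>\<^bsub>L\<^esub> S) = \<Sqinter>\<^bsub>L'\<^esub> (\<phi> ` S))"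

definition C_hom :: "bool \<Rightarrow> 'i set set \<Rightarrow> 'j set set \<Rightarrow> ('a, 'c) gorder_scheme \<Rightarrow> ('b, 'd) gorder_scheme
    \<Rightarrow> ('a \<Rightarrow> 'b) \<Rightarrow> bool" where
  "C_hom fr II JJ L L' \<phi> \<equiv>
     \<phi> \<in> carrier L \<rightarrow>\<^sub>E carrier L' \<and>
     (if fr then frame_hom L L' \<phi> else coframe_hom L L' \<phi>) \<and>
     (\<forall>x\<in>carrier L. \<forall>y\<in>carrier L. x \<sqsubseteq>\<^bsub>L\<^esub> y \<longrightarrow> \<phi> x \<sqsubseteq>\<^bsub>L'\<^esub> \<phi> y) \<and>
     (\<forall>I\<in>II. \<forall>f\<in>I \<rightarrow> carrier L. \<phi> (infi L I f) = infi L' I (\<phi> \<circ> f)) \<and>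
     (\<forall>J\<in>JJ. \<forall>f\<in>J \<rightarrow> carrier L. \<phi> (supr L J f) = supr L' J (\<phi> \<circ> f))"

definition lat_filter :: "('a, 'c) gorder_scheme \<Rightarrow> 'a set \<Rightarrow> bool" where
  "lat_filter L F \<equiv> F \<subseteq> carrier L \<and> F \<noteq> {} \<and>
     (\<forall>x\<in>F. \<forall>y\<in>carrier L. x \<sqsubseteq>\<^bsub>L\<^esub> y \<longrightarrow> y \<in> F) \<and>
     (\<forall>x\<in>F. \<forall>y\<in>F. x \<sqinter>\<^bsub>L\<^esub> y \<in> F)"

definition conv_lim :: "('a, 'c) gorder_scheme \<Rightarrow> ('a set \<Rightarrow> 'a) \<Rightarrow> bool" where
  "conv_lim L lim \<equiv> (\<forall>F. lat_filter L F \<longrightarrow> lim F \<in> carrier L) \<and>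
     (\<forall>F G. lat_filter L F \<and> lat_filter L G \<and> F \<subseteq> G \<longrightarrow> lim F \<sqsubseteq>\<^bsub>L\<^esub> lim G)"

definition Cconv_hom :: "bool \<Rightarrow> 'i set set \<Rightarrow> 'j set set \<Rightarrow> ('a, 'c) gorder_scheme \<Rightarrow> ('a set \<Rightarrow> 'a)
    \<Rightarrow> ('b, 'd) gorder_scheme \<Rightarrow> ('b set \<Rightarrow> 'b) \<Rightarrow> ('a \<Rightarrow> 'b) \<Rightarrow> bool" where
  "Cconv_hom fr II JJ L lim L' lim' \<phi> \<equiv> C_hom fr II JJ L L' \<phi> \<and>
     (\<forall>F. lat_filter L' F \<longrightarrow> lim' F \<sqsubseteq>\<^bsub>L'\<^esub> \<phi> (lim {l \<in> carrier L. \<phi> l \<in> F}))"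

abbreviation set_filter :: "'x set \<Rightarrow> 'x set set \<Rightarrow> bool" where
  "set_filter X F \<equiv> lat_filter (PowL X) F"

definition conv_space :: "'x set \<Rightarrow> ('x set set \<Rightarrow> 'x \<Rightarrow> bool) \<Rightarrow> bool" where
  "conv_space X cv \<equiv> (\<forall>F x. cv F x \<longrightarrow> set_filter X F \<and> x \<in> X) \<and>
     (\<forall>x\<in>X. cv {S. S \<subseteq> X \<and> x \<in> S} x) \<and>
     (\<forall>F G x. cv F x \<and> set_filter X G \<and> F \<subseteq> G \<longrightarrow> cv G x)"

definition img_filter :: "'x set \<Rightarrow> 'y set \<Rightarrow> ('x \<Rightarrow> 'y) \<Rightarrow> 'x set set \<Rightarrow> 'y set set" where
  "img_filter X Y f F = {B. B \<subseteq> Y \<and> {x \<in> X. f x \<in> B} \<in> F}"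

definition continuous_conv :: "'x set \<Rightarrow> ('x set set \<Rightarrow> 'x \<Rightarrow> bool) \<Rightarrow> 'y set
    \<Rightarrow> ('y set set \<Rightarrow> 'y \<Rightarrow> bool) \<Rightarrow> ('x \<Rightarrow> 'y) \<Rightarrow> bool" where
  "continuous_conv X cv Y cv' f \<equiv> f \<in> X \<rightarrow>\<^sub>E Y \<and>
     (\<forall>F x. cv F x \<longrightarrow> cv' (img_filter X Y f F) (f x))"

definition pow_lim :: "'x set \<Rightarrow> ('x set set \<Rightarrow> 'x \<Rightarrow> bool) \<Rightarrow> 'x set set \<Rightarrow> 'x set" where
  "pow_lim X cv F = {x \<in> X. cv F x}"

definition pow_map :: "'x set \<Rightarrow> 'y set \<Rightarrow> ('x \<Rightarrow> 'y) \<Rightarrow> 'y set \<Rightarrow> 'x set" where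
  "pow_map X Y f = (\<lambda>B\<in>Pow Y. {x \<in> X. f x \<in> B})"

abbreviation one_lim :: "unit set set \<Rightarrow> unit set" where
  "one_lim F \<equiv> UNIV"

definition pt :: "bool \<Rightarrow> 'i set set \<Rightarrow> 'j set set \<Rightarrow> ('a, 'c) gorder_scheme \<Rightarrow> ('a set \<Rightarrow> 'a)
    \<Rightarrow> ('a \<Rightarrow> unit set) set" where
  "pt fr II JJ L lim = {\<psi>. Cconv_hom fr II JJ L lim (PowL (UNIV :: unit set)) one_lim \<psi>}"

definition bullet :: "bool \<Rightarrow> 'i set set \<Rightarrow> 'j set set \<Rightarrow> ('a, 'c) gorder_scheme \<Rightarrow> ('a set \<Rightarrow> 'a)
    \<Rightarrow> 'a \<Rightarrow> ('a \<Rightarrow> unit set) set" where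
  "bullet fr II JJ L lim l = {\<psi> \<in> pt fr II JJ L lim. \<psi> l = UNIV}"

definition circ :: "bool \<Rightarrow> 'i set set \<Rightarrow> 'j set set \<Rightarrow> ('a, 'c) gorder_scheme \<Rightarrow> ('a set \<Rightarrow> 'a)
    \<Rightarrow> ('a \<Rightarrow> unit set) set set \<Rightarrow> 'a set" where
  "circ fr II JJ L lim F = {l \<in> carrier L. bullet fr II JJ L lim l \<in> F}"

definition pt_conv :: "bool \<Rightarrow> 'i set set \<Rightarrow> 'j set set \<Rightarrow> ('a, 'c) gorder_scheme \<Rightarrow> ('a set \<Rightarrow> 'a)
    \<Rightarrow> ('a \<Rightarrow> unit set) set set \<Rightarrow> ('a \<Rightarrow> unit set) \<Rightarrow> bool" where
  "pt_conv fr II JJ L lim F \<psi> \<equiv> set_filter (pt fr II JJ L lim) F \<and>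
     \<psi> \<in> bullet fr II JJ L lim (lim (circ fr II JJ L lim F))"

definition pt_map :: "bool \<Rightarrow> 'i set set \<Rightarrow> 'j set set \<Rightarrow> ('a, 'c) gorder_scheme \<Rightarrow> ('a set \<Rightarrow> 'a)
    \<Rightarrow> ('b, 'd) gorder_scheme \<Rightarrow> ('b set \<Rightarrow> 'b) \<Rightarrow> ('a \<Rightarrow> 'b)
    \<Rightarrow> ('b \<Rightarrow> unit set) \<Rightarrow> ('a \<Rightarrow> unit set)" where
  "pt_map fr II JJ L lim L' lim' \<phi> = (\<lambda>\<psi>\<in>pt fr II JJ L' lim'. \<lambda>l\<in>carrier L. \<psi> (\<phi> l))"

definition counit :: "bool \<Rightarrow> 'i set set \<Rightarrow> 'j set set \<Rightarrow> ('a, 'c) gorder_scheme \<Rightarrow> ('a set \<Rightarrow> 'a)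
    \<Rightarrow> 'a \<Rightarrow> ('a \<Rightarrow> unit set) set" where
  "counit fr II JJ L lim = (\<lambda>l\<in>carrier L. bullet fr II JJ L lim l)"

end

theory Submission
  imports Defs
begin


lemma PowL_simps[simp]: "carrier (PowL X) = Pow X" "(a \<sqsubseteq>\<^bsub>PowL X\<^esub> b) = (a \<subseteq> b)"
  "(a .=\<^bsub>PowL X\<^esub> b) = (a = b)"
  by (auto simp: PowL_def)

lemma PowL_cl: "complete_lattice (PowL X)"
  unfolding PowL_def by (rule powerset_is_complete_lattice)

lemma PowL_Sup: "A \<subseteq> Pow X \<Longrightarrow> \<Squnion>\<^bsub>PowL X\<^esub> A = \<Union>A"
proof -
  assume A: "A \<subseteq> Pow X"
  have U: "Upper (PowL X) A = {u. u \<subseteq> X \<and> \<Union>A \<subseteq> u}"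
  proof (rule Set.set_eqI)
    fix u show "u \<in> Upper (PowL X) A \<longleftrightarrow> u \<in> {u. u \<subseteq> X \<and> \<Union>A \<subseteq> u}"
      unfolding Upper_def PowL_simps Int_absorb2[OF A] mem_Collect_eq Int_iff Pow_iff
      by (simp add: Sup_le_iff) blast
  qed
  have "least (PowL X) l (Upper (PowL X) A) \<longleftrightarrow> l = \<Union>A" for l
  proof
    assume "least (PowL X) l (Upper (PowL X) A)"
    then have "l \<subseteq> X" "\<Union>A \<subseteq> l" "\<forall>x. x \<subseteq> X \<and> \<Union>A \<subseteq> x \<longrightarrow> l \<subseteq> x"
      unfolding U least_def PowL_simps by auto
    moreover have "\<Union>A \<subseteq> X" using A by blast
    ultimately show "l = \<Union>A" by blast
  next
    assume "l = \<Union>A" then show "least (PowL X) l (Upper (PowL X) A)"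
      unfolding U least_def PowL_simps using A by blast
  qed
  then show ?thesis unfolding sup_def by simp
qed

lemma PowL_Inf: "A \<subseteq> Pow X \<Longrightarrow> \<Sqinter>\<^bsub>PowL X\<^esub> A = X \<inter> \<Inter>A"
proof -
  assume A: "A \<subseteq> Pow X"
  have U: "Lower (PowL X) A = {u. u \<subseteq> X \<and> u \<subseteq> X \<inter> \<Inter>A}"
  proof (rule Set.set_eqI)
    fix u show "u \<in> Lower (PowL X) A \<longleftrightarrow> u \<in> {u. u \<subseteq> X \<and> u \<subseteq> X \<inter> \<Inter>A}"
      unfolding Lower_def PowL_simps Int_absorb2[OF A] mem_Collect_eq Int_iff Pow_iff
      by blast
  qed
  have "greatest (PowL X) l (Lower (PowL X) A) \<longleftrightarrow> l = X \<inter> \<Inter>A" for l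
  proof
    assume g: "greatest (PowL X) l (Lower (PowL X) A)"
    have h1: "l \<subseteq> X \<inter> \<Inter>A" using g unfolding U greatest_def by simp
    have h2: "X \<inter> \<Inter>A \<subseteq> l" using g unfolding U greatest_def PowL_simps by simp
    show "l = X \<inter> \<Inter>A" using h1 h2 by (rule subset_antisym)
  next
    assume "l = X \<inter> \<Inter>A" then show "greatest (PowL X) l (Lower (PowL X) A)"
      unfolding U greatest_def PowL_simps by auto
  qed
  then show ?thesis unfolding inf_def by simp
qed

lemma P1_Sup[simp]: "\<Squnion>\<^bsub>PowL (UNIV::'u set)\<^esub> A = \<Union>A"
  by (rule PowL_Sup) simp
lemma P1_Inf[simp]: "\<Sqinter>\<^bsub>PowL (UNIV::'u set)\<^esub> A = \<Inter>A"
  by (subst PowL_Inf) auto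

lemma PowL_meet: "a \<subseteq> X \<Longrightarrow> b \<subseteq> X \<Longrightarrow> a \<sqinter>\<^bsub>PowL X\<^esub> b = a \<inter> b"
  by (auto simp: meet_def PowL_Inf)
lemma PowL_join: "a \<subseteq> X \<Longrightarrow> b \<subseteq> X \<Longrightarrow> a \<squnion>\<^bsub>PowL X\<^esub> b = a \<union> b"
  by (auto simp: join_def PowL_Sup)
lemma P1_meet[simp]: "a \<sqinter>\<^bsub>PowL (UNIV::'u set)\<^esub> b = a \<inter> b"
  by (simp add: PowL_meet)
lemma P1_join[simp]: "a \<squnion>\<^bsub>PowL (UNIV::'u set)\<^esub> b = a \<union> b"
  by (simp add: PowL_join)
lemma PowL_infi: "f \<in> I \<rightarrow> Pow X \<Longrightarrow> infi (PowL X) I f = X \<inter> (\<Inter>i\<in>I. f i)"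
  unfolding infi_def by (subst PowL_Inf) auto
lemma PowL_supr: "f \<in> I \<rightarrow> Pow X \<Longrightarrow> supr (PowL X) I f = (\<Union>i\<in>I. f i)"
  unfolding supr_def by (subst PowL_Sup) auto
lemma P1_infi[simp]: "infi (PowL (UNIV::'u set)) I f = (\<Inter>i\<in>I. f i)"
  by (simp add: PowL_infi)
lemma P1_supr[simp]: "supr (PowL (UNIV::'u set)) I f = (\<Union>i\<in>I. f i)"
  by (simp add: PowL_supr)

lemma unit_set_cases: "(S::unit set) = {} \<or> S = UNIV"
  by (metis (full_types) UNIV_unit subset_singletonD top_greatest)

lemma PowL_frame: "is_frame (PowL X)"
  unfolding is_frame_def
proof (intro conjI ballI allI impI)
  show "complete_lattice (PowL X)" by (rule PowL_cl)
  fix a S assume a: "a \<in> carrier (PowL X)" and S: "S \<subseteq> carrier (PowL X)"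
  have "(\<lambda>s. a \<sqinter>\<^bsub>PowL X\<^esub> s) ` S = (\<lambda>s. a \<inter> s) ` S"
    using a S by (intro image_cong) (auto simp: PowL_meet)
  moreover have "(\<lambda>s. a \<inter> s) ` S \<subseteq> Pow X" using a by auto
  moreover have "\<Union>S \<subseteq> X" using S by auto
  ultimately show "a \<sqinter>\<^bsub>PowL X\<^esub> \<Squnion>\<^bsub>PowL X\<^esub>S = \<Squnion>\<^bsub>PowL X\<^esub>((\<lambda>s. a \<sqinter>\<^bsub>PowL X\<^esub> s) ` S)"
    using a S by (auto simp: PowL_Sup PowL_meet)
qed

lemma PowL_coframe: "is_coframe (PowL X)"
  unfolding is_coframe_def
proof (intro conjI ballI allI impI)
  show "complete_lattice (PowL X)" by (rule PowL_cl)
  fix a S assume a: "a \<in> carrier (PowL X)" and S: "S \<subseteq> carrier (PowL X)"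
  have "(\<lambda>s. a \<squnion>\<^bsub>PowL X\<^esub> s) ` S = (\<lambda>s. a \<union> s) ` S"
    using a S by (intro image_cong) (auto simp: PowL_join)
  moreover have "(\<lambda>s. a \<union> s) ` S \<subseteq> Pow X" using a S by auto
  moreover have "X \<inter> \<Inter>S \<subseteq> X" by auto
  ultimately show "a \<squnion>\<^bsub>PowL X\<^esub> \<Sqinter>\<^bsub>PowL X\<^esub>S = \<Sqinter>\<^bsub>PowL X\<^esub>((\<lambda>s. a \<squnion>\<^bsub>PowL X\<^esub> s) ` S)"
    using a S by (auto simp: PowL_Inf PowL_join)
qed

lemma PowL_Cobj: "C_obj fr (PowL X)"
  by (simp add: C_obj_def PowL_frame PowL_coframe)

lemma Cobj_cl: "C_obj fr L \<Longrightarrow> complete_lattice L"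
  by (auto simp: C_obj_def is_frame_def is_coframe_def split: if_splits)

lemma cl_weak: "complete_lattice L \<Longrightarrow> weak_complete_lattice L"
  by (simp add: complete_lattice.axioms(1) complete_lattice.sup_exists complete_lattice.inf_exists
     partial_order.axioms(1) weak_complete_lattice.intro weak_complete_lattice_axioms.intro)

lemma cl_Inf_closed: "complete_lattice L \<Longrightarrow> A \<subseteq> carrier L \<Longrightarrow> \<Sqinter>\<^bsub>L\<^esub>A \<in> carrier L"
  by (metis cl_weak weak_complete_lattice.inf_closed)
lemma cl_Sup_closed: "complete_lattice L \<Longrightarrow> A \<subseteq> carrier L \<Longrightarrow> \<Squnion>\<^bsub>L\<^esub>A \<in> carrier L"
  by (metis cl_weak weak_complete_lattice.sup_closed)
lemma cl_top: "complete_lattice L \<Longrightarrow> x \<in> carrier L \<Longrightarrow> x \<sqsubseteq>\<^bsub>L\<^esub> \<Sqinter>\<^bsub>L\<^esub>{}"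
  by (metis cl_weak weak_complete_lattice.inf_greatest empty_iff empty_subsetI)
lemma cl_meet_closed: "complete_lattice L \<Longrightarrow> x \<in> carrier L \<Longrightarrow> y \<in> carrier L \<Longrightarrow> x \<sqinter>\<^bsub>L\<^esub> y \<in> carrier L"
  unfolding meet_def by (rule cl_Inf_closed) auto
lemma cl_join_closed: "complete_lattice L \<Longrightarrow> x \<in> carrier L \<Longrightarrow> y \<in> carrier L \<Longrightarrow> x \<squnion>\<^bsub>L\<^esub> y \<in> carrier L"
  unfolding join_def by (rule cl_Sup_closed) auto
lemma cl_trans: "complete_lattice L \<Longrightarrow> x \<sqsubseteq>\<^bsub>L\<^esub> y \<Longrightarrow> y \<sqsubseteq>\<^bsub>L\<^esub> z \<Longrightarrow> x \<in> carrier L \<Longrightarrow> y \<in> carrier L \<Longrightarrow> z \<in> carrier L \<Longrightarrow> x \<sqsubseteq>\<^bsub>L\<^esub> z"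
  by (metis complete_lattice.axioms(1) partial_order.axioms(1) weak_partial_order.le_trans)


lemma Chom_fun: "C_hom fr II JJ L L' \<phi> \<Longrightarrow> x \<in> carrier L \<Longrightarrow> \<phi> x \<in> carrier L'"
  by (auto simp: C_hom_def)
lemma Chom_ext: "C_hom fr II JJ L L' \<phi> \<Longrightarrow> x \<notin> carrier L \<Longrightarrow> \<phi> x = undefined"
  by (auto simp: C_hom_def)
lemma Chom_mono: "C_hom fr II JJ L L' \<phi> \<Longrightarrow> x \<in> carrier L \<Longrightarrow> y \<in> carrier L \<Longrightarrow> x \<sqsubseteq>\<^bsub>L\<^esub> y \<Longrightarrow> \<phi> x \<sqsubseteq>\<^bsub>L'\<^esub> \<phi> y"
  by (auto simp: C_hom_def)
lemma Chom_top: "C_hom fr II JJ L L' \<phi> \<Longrightarrow> \<phi> (\<Sqinter>\<^bsub>L\<^esub>{}) = \<Sqinter>\<^bsub>L'\<^esub>{}"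
  by (cases fr) (auto simp: C_hom_def frame_hom_def coframe_hom_def)
lemma Chom_meet: "C_hom fr II JJ L L' \<phi> \<Longrightarrow> x \<in> carrier L \<Longrightarrow> y \<in> carrier L \<Longrightarrow>
   \<phi> (x \<sqinter>\<^bsub>L\<^esub> y) = \<phi> x \<sqinter>\<^bsub>L'\<^esub> \<phi> y"
proof (cases fr)
  case True
  assume "C_hom fr II JJ L L' \<phi>" "x \<in> carrier L" "y \<in> carrier L"
  then show ?thesis using True by (auto simp: C_hom_def frame_hom_def)
next
  case False
  assume h: "C_hom fr II JJ L L' \<phi>" "x \<in> carrier L" "y \<in> carrier L"
  then have "\<phi> (\<Sqinter>\<^bsub>L\<^esub>{x,y}) = \<Sqinter>\<^bsub>L'\<^esub>(\<phi> ` {x,y})" using False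
    by (auto simp: C_hom_def coframe_hom_def)
  then show ?thesis by (simp add: meet_def)
qed
lemma Chom_infi: "C_hom fr II JJ L L' \<phi> \<Longrightarrow> I \<in> II \<Longrightarrow> f \<in> I \<rightarrow> carrier L \<Longrightarrow> \<phi> (infi L I f) = infi L' I (\<phi> \<circ> f)"
  by (auto simp: C_hom_def)
lemma Chom_supr: "C_hom fr II JJ L L' \<phi> \<Longrightarrow> J \<in> JJ \<Longrightarrow> f \<in> J \<rightarrow> carrier L \<Longrightarrow> \<phi> (supr L J f) = supr L' J (\<phi> \<circ> f)"
  by (auto simp: C_hom_def)

lemma filter_top: "complete_lattice L \<Longrightarrow> lat_filter L F \<Longrightarrow> \<Sqinter>\<^bsub>L\<^esub>{} \<in> F"
  unfolding lat_filter_def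
  by (metis cl_Inf_closed cl_top empty_subsetI equals0I subset_iff)

lemma preimage_filter:
  assumes cl: "complete_lattice L" "complete_lattice L'" and h: "C_hom fr II JJ L L' \<phi>"
    and G: "lat_filter L' G"
  shows "lat_filter L {l \<in> carrier L. \<phi> l \<in> G}"
  unfolding lat_filter_def
proof (intro conjI ballI impI)
  show "{l \<in> carrier L. \<phi> l \<in> G} \<subseteq> carrier L" by auto
  have "\<Sqinter>\<^bsub>L\<^esub>{} \<in> carrier L" using cl by (simp add: cl_Inf_closed)
  moreover have "\<phi> (\<Sqinter>\<^bsub>L\<^esub>{}) \<in> G" using Chom_top[OF h] filter_top[OF cl(2) G] by simp
  ultimately show "{l \<in> carrier L. \<phi> l \<in> G} \<noteq> {}" by blast
  fix x y assume x: "x \<in> {l \<in> carrier L. \<phi> l \<in> G}"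
  { assume y: "y \<in> carrier L" and le: "x \<sqsubseteq>\<^bsub>L\<^esub> y"
    have "\<phi> x \<sqsubseteq>\<^bsub>L'\<^esub> \<phi> y" using Chom_mono[OF h] x y le by auto
    moreover have "\<phi> y \<in> carrier L'" using Chom_fun[OF h y] .
    ultimately show "y \<in> {l \<in> carrier L. \<phi> l \<in> G}" using G x y unfolding lat_filter_def by blast }
  { assume y: "y \<in> {l \<in> carrier L. \<phi> l \<in> G}"
    have "\<phi> (x \<sqinter>\<^bsub>L\<^esub> y) = \<phi> x \<sqinter>\<^bsub>L'\<^esub> \<phi> y" using Chom_meet[OF h] x y by auto
    moreover have "x \<sqinter>\<^bsub>L\<^esub> y \<in> carrier L" using x y cl by (simp add: cl_meet_closed)
    ultimately show "x \<sqinter>\<^bsub>L\<^esub> y \<in> {l \<in> carrier L. \<phi> l \<in> G}" using G x y unfolding lat_filter_def by auto }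
qed

lemma Chom_comp:
  assumes cl: "complete_lattice L" "complete_lattice L'"
    and h1: "C_hom fr II JJ L L' \<phi>" and h2: "C_hom fr II JJ L' L'' \<psi>"
  shows "C_hom fr II JJ L L'' (\<lambda>l\<in>carrier L. \<psi> (\<phi> l))"
proof -
  have f1: "\<phi> x \<in> carrier L'" if "x \<in> carrier L" for x using Chom_fun[OF h1 that] .
  have img: "(\<lambda>l\<in>carrier L. \<psi> (\<phi> l)) ` S = \<psi> ` \<phi> ` S" if "S \<subseteq> carrier L" for S
    using that by (auto simp: image_iff)
  have imgS: "\<phi> ` S \<subseteq> carrier L'" if "S \<subseteq> carrier L" for S using that f1 by auto
  have infi_eq: "infi L'' I ((\<lambda>l\<in>carrier L. \<psi> (\<phi> l)) \<circ> f) = infi L'' I (\<psi> \<circ> (\<phi> \<circ> f))"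
    if "f \<in> I \<rightarrow> carrier L" for I f
    unfolding infi_def using that by (intro arg_cong[where f="Lattice.inf L''"]) (auto simp: image_iff)
  have supr_eq: "supr L'' I ((\<lambda>l\<in>carrier L. \<psi> (\<phi> l)) \<circ> f) = supr L'' I (\<psi> \<circ> (\<phi> \<circ> f))"
    if "f \<in> I \<rightarrow> carrier L" for I f
    unfolding supr_def using that by (intro arg_cong[where f="Lattice.sup L''"]) (auto simp: image_iff)
  have cinf: "infi L I f \<in> carrier L" if "f \<in> I \<rightarrow> carrier L" for I f
    unfolding infi_def using that cl by (intro cl_Inf_closed) auto
  have csup: "supr L I f \<in> carrier L" if "f \<in> I \<rightarrow> carrier L" for I f
    unfolding supr_def using that cl by (intro cl_Sup_closed) auto
  have comp: "\<phi> \<circ> f \<in> I \<rightarrow> carrier L'" if "f \<in> I \<rightarrow> carrier L" for I f using that f1 by (auto simp: Pi_iff)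
  show ?thesis
    unfolding C_hom_def
  proof (intro conjI ballI allI impI)
    show "(\<lambda>l\<in>carrier L. \<psi> (\<phi> l)) \<in> carrier L \<rightarrow>\<^sub>E carrier L''"
      using f1 Chom_fun[OF h2] by auto
    show "if fr then frame_hom L L'' (\<lambda>l\<in>carrier L. \<psi> (\<phi> l)) else coframe_hom L L'' (\<lambda>l\<in>carrier L. \<psi> (\<phi> l))"
    proof (cases fr)
      case True
      then have a: "frame_hom L L' \<phi>" "frame_hom L' L'' \<psi>" using h1 h2 by (auto simp: C_hom_def)
      have t: "(\<lambda>l\<in>carrier L. \<psi> (\<phi> l)) (\<Sqinter>\<^bsub>L\<^esub>{}) = \<Sqinter>\<^bsub>L''\<^esub>{}"
          using a cl cl_Inf_closed[of L "{}"] unfolding frame_hom_def by simp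
      have m: "(\<lambda>l\<in>carrier L. \<psi> (\<phi> l)) (x \<sqinter>\<^bsub>L\<^esub> y) = (\<lambda>l\<in>carrier L. \<psi> (\<phi> l)) x \<sqinter>\<^bsub>L''\<^esub> (\<lambda>l\<in>carrier L. \<psi> (\<phi> l)) y"
        if "x \<in> carrier L" "y \<in> carrier L" for x y
          using that a cl cl_meet_closed[of L x y] f1 unfolding frame_hom_def by simp
      have s: "(\<lambda>l\<in>carrier L. \<psi> (\<phi> l)) (\<Squnion>\<^bsub>L\<^esub>S) = \<Squnion>\<^bsub>L''\<^esub>((\<lambda>l\<in>carrier L. \<psi> (\<phi> l)) ` S)"
        if S: "S \<subseteq> carrier L" for S
          using S a cl cl_Sup_closed[OF _ S] imgS[OF S] unfolding frame_hom_def img[OF S] by simp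
      show ?thesis using True t m s unfolding frame_hom_def by simp
    next
      case False
      then have a: "coframe_hom L L' \<phi>" "coframe_hom L' L'' \<psi>" using h1 h2 by (auto simp: C_hom_def)
      have t: "(\<lambda>l\<in>carrier L. \<psi> (\<phi> l)) (\<Squnion>\<^bsub>L\<^esub>{}) = \<Squnion>\<^bsub>L''\<^esub>{}"
          using a cl cl_Sup_closed[of L "{}"] unfolding coframe_hom_def by simp
      have m: "(\<lambda>l\<in>carrier L. \<psi> (\<phi> l)) (x \<squnion>\<^bsub>L\<^esub> y) = (\<lambda>l\<in>carrier L. \<psi> (\<phi> l)) x \<squnion>\<^bsub>L''\<^esub> (\<lambda>l\<in>carrier L. \<psi> (\<phi> l)) y"
        if "x \<in> carrier L" "y \<in> carrier L" for x y
          using that a cl cl_join_closed[of L x y] f1 unfolding coframe_hom_def by simp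
      have s: "(\<lambda>l\<in>carrier L. \<psi> (\<phi> l)) (\<Sqinter>\<^bsub>L\<^esub>S) = \<Sqinter>\<^bsub>L''\<^esub>((\<lambda>l\<in>carrier L. \<psi> (\<phi> l)) ` S)"
        if S: "S \<subseteq> carrier L" for S
          using S a cl cl_Inf_closed[OF _ S] imgS[OF S] unfolding coframe_hom_def img[OF S] by simp
      show ?thesis using False t m s unfolding coframe_hom_def by simp
    qed
    fix x y assume "x \<in> carrier L" "y \<in> carrier L" "x \<sqsubseteq>\<^bsub>L\<^esub> y"
    then show "(\<lambda>l\<in>carrier L. \<psi> (\<phi> l)) x \<sqsubseteq>\<^bsub>L''\<^esub> (\<lambda>l\<in>carrier L. \<psi> (\<phi> l)) y"
      using Chom_mono[OF h1] Chom_mono[OF h2] f1 by simp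
  next
    fix I f assume I: "I \<in> II" and f: "f \<in> I \<rightarrow> carrier L"
    show "(\<lambda>l\<in>carrier L. \<psi> (\<phi> l)) (infi L I f) = infi L'' I ((\<lambda>l\<in>carrier L. \<psi> (\<phi> l)) \<circ> f)"
      using cinf[OF f] infi_eq[OF f] Chom_infi[OF h1 I f] Chom_infi[OF h2 I comp[OF f]] by simp
  next
    fix I f assume I: "I \<in> JJ" and f: "f \<in> I \<rightarrow> carrier L"
    show "(\<lambda>l\<in>carrier L. \<psi> (\<phi> l)) (supr L I f) = supr L'' I ((\<lambda>l\<in>carrier L. \<psi> (\<phi> l)) \<circ> f)"
      using csup[OF f] supr_eq[OF f] Chom_supr[OF h1 I f] Chom_supr[OF h2 I comp[OF f]] by simp
  qed
qed


definition ev :: "'x \<Rightarrow> 'x set \<Rightarrow> unit set" where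
  "ev x B = (if x \<in> B then UNIV else {})"

lemma ev_simps[simp]:
  "ev x A = ev x B \<longleftrightarrow> (x \<in> A \<longleftrightarrow> x \<in> B)"
  "ev x A = UNIV \<longleftrightarrow> x \<in> A" "UNIV = ev x A \<longleftrightarrow> x \<in> A"
  "ev x A = {} \<longleftrightarrow> x \<notin> A" "{} = ev x A \<longleftrightarrow> x \<notin> A"
  "ev x A \<inter> ev x B = ev x (A \<inter> B)" "ev x A \<union> ev x B = ev x (A \<union> B)"
  "ev x A \<subseteq> ev x B \<longleftrightarrow> (x \<in> A \<longrightarrow> x \<in> B)"
  "(\<Union>s\<in>S. ev x (h s)) = ev x (\<Union>s\<in>S. h s)"
  "(\<Inter>s\<in>S. ev x (h s)) = ev x (\<Inter>s\<in>S. h s)"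
  by (auto simp: ev_def)

lemma restrict_image: "S \<subseteq> A \<Longrightarrow> restrict g A ` S = g ` S"
  by auto

definition PW :: "bool \<Rightarrow> 'i set set \<Rightarrow> 'j set set \<Rightarrow> ('a, 'c) gorder_scheme \<Rightarrow> ('a \<Rightarrow> 'x set) \<Rightarrow> 'x \<Rightarrow> bool" where
  "PW fr II JJ L \<phi> x \<equiv>
    (if fr then
       x \<in> \<phi> (\<Sqinter>\<^bsub>L\<^esub>{}) \<and>
       (\<forall>a\<in>carrier L. \<forall>b\<in>carrier L. x \<in> \<phi> (a \<sqinter>\<^bsub>L\<^esub> b) \<longleftrightarrow> x \<in> \<phi> a \<and> x \<in> \<phi> b) \<and>
       (\<forall>S. S \<subseteq> carrier L \<longrightarrow> (x \<in> \<phi> (\<Squnion>\<^bsub>L\<^esub>S) \<longleftrightarrow> (\<exists>s\<in>S. x \<in> \<phi> s)))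
     else
       x \<notin> \<phi> (\<Squnion>\<^bsub>L\<^esub>{}) \<and>
       (\<forall>a\<in>carrier L. \<forall>b\<in>carrier L. x \<in> \<phi> (a \<squnion>\<^bsub>L\<^esub> b) \<longleftrightarrow> x \<in> \<phi> a \<or> x \<in> \<phi> b) \<and>
       (\<forall>S. S \<subseteq> carrier L \<longrightarrow> (x \<in> \<phi> (\<Sqinter>\<^bsub>L\<^esub>S) \<longleftrightarrow> (\<forall>s\<in>S. x \<in> \<phi> s)))) \<and>
    (\<forall>a\<in>carrier L. \<forall>b\<in>carrier L. a \<sqsubseteq>\<^bsub>L\<^esub> b \<longrightarrow> x \<in> \<phi> a \<longrightarrow> x \<in> \<phi> b) \<and>
    (\<forall>I\<in>II. \<forall>f\<in>I \<rightarrow> carrier L. x \<in> \<phi> (infi L I f) \<longleftrightarrow> (\<forall>i\<in>I. x \<in> \<phi> (f i))) \<and>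
    (\<forall>J\<in>JJ. \<forall>f\<in>J \<rightarrow> carrier L. x \<in> \<phi> (supr L J f) \<longleftrightarrow> (\<exists>i\<in>J. x \<in> \<phi> (f i)))"

lemma pw_one:
  assumes cl: "complete_lattice L"
  shows "C_hom fr II JJ L (PowL (UNIV::unit set)) (\<lambda>l\<in>carrier L. ev x (\<phi> l)) \<longleftrightarrow> PW fr II JJ L \<phi> x"
proof -
  have cI: "\<Sqinter>\<^bsub>L\<^esub>S \<in> carrier L" if "S \<subseteq> carrier L" for S using cl that by (rule cl_Inf_closed)
  have cS: "\<Squnion>\<^bsub>L\<^esub>S \<in> carrier L" if "S \<subseteq> carrier L" for S using cl that by (rule cl_Sup_closed)
  have cm: "a \<sqinter>\<^bsub>L\<^esub> b \<in> carrier L" "a \<squnion>\<^bsub>L\<^esub> b \<in> carrier L" if "a \<in> carrier L" "b \<in> carrier L" for a b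
    using cl that by (auto intro: cl_meet_closed cl_join_closed)
  have ci: "infi L I f \<in> carrier L" "supr L I f \<in> carrier L" if "f \<in> I \<rightarrow> carrier L" for I f
    using that unfolding infi_def supr_def by (auto intro!: cI cS)
  have comp: "(\<Inter>i\<in>I. ((\<lambda>l\<in>carrier L. ev x (\<phi> l)) \<circ> f) i) = ev x (\<Inter>i\<in>I. \<phi> (f i))"
     "(\<Union>i\<in>I. ((\<lambda>l\<in>carrier L. ev x (\<phi> l)) \<circ> f) i) = ev x (\<Union>i\<in>I. \<phi> (f i))"
    if "f \<in> I \<rightarrow> carrier L" for I f
  proof -
    have "(\<Inter>i\<in>I. ((\<lambda>l\<in>carrier L. ev x (\<phi> l)) \<circ> f) i) = (\<Inter>i\<in>I. ev x (\<phi> (f i)))"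
      "(\<Union>i\<in>I. ((\<lambda>l\<in>carrier L. ev x (\<phi> l)) \<circ> f) i) = (\<Union>i\<in>I. ev x (\<phi> (f i)))"
      using that by (auto intro!: INF_cong[OF refl] SUP_cong[OF refl] simp del: ev_simps)
    then show "(\<Inter>i\<in>I. ((\<lambda>l\<in>carrier L. ev x (\<phi> l)) \<circ> f) i) = ev x (\<Inter>i\<in>I. \<phi> (f i))"
     "(\<Union>i\<in>I. ((\<lambda>l\<in>carrier L. ev x (\<phi> l)) \<circ> f) i) = ev x (\<Union>i\<in>I. \<phi> (f i))" by simp_all
  qed
  let ?c = "(\<lambda>l\<in>carrier L. ev x (\<phi> l))"
  have E0: "?c \<in> carrier L \<rightarrow>\<^sub>E carrier (PowL (UNIV::unit set))" by auto
  have E1: "?c (\<Sqinter>\<^bsub>L\<^esub>{}) = \<Sqinter>\<^bsub>PowL (UNIV::unit set)\<^esub>{} \<longleftrightarrow> x \<in> \<phi> (\<Sqinter>\<^bsub>L\<^esub>{})"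
    using cI[of "{}"] by simp
  have E2: "?c (\<Squnion>\<^bsub>L\<^esub>{}) = \<Squnion>\<^bsub>PowL (UNIV::unit set)\<^esub>{} \<longleftrightarrow> x \<notin> \<phi> (\<Squnion>\<^bsub>L\<^esub>{})"
    using cS[of "{}"] by simp
  have E3: "?c (a \<sqinter>\<^bsub>L\<^esub> b) = ?c a \<sqinter>\<^bsub>PowL (UNIV::unit set)\<^esub> ?c b \<longleftrightarrow> (x \<in> \<phi> (a \<sqinter>\<^bsub>L\<^esub> b) \<longleftrightarrow> x \<in> \<phi> a \<and> x \<in> \<phi> b)"
    if "a \<in> carrier L" "b \<in> carrier L" for a b using that cm[OF that] by simp
  have E4: "?c (a \<squnion>\<^bsub>L\<^esub> b) = ?c a \<squnion>\<^bsub>PowL (UNIV::unit set)\<^esub> ?c b \<longleftrightarrow> (x \<in> \<phi> (a \<squnion>\<^bsub>L\<^esub> b) \<longleftrightarrow> x \<in> \<phi> a \<or> x \<in> \<phi> b)"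
    if "a \<in> carrier L" "b \<in> carrier L" for a b using that cm[OF that] by simp
  have E5: "?c (\<Squnion>\<^bsub>L\<^esub>S) = \<Squnion>\<^bsub>PowL (UNIV::unit set)\<^esub>(?c ` S) \<longleftrightarrow> (x \<in> \<phi> (\<Squnion>\<^bsub>L\<^esub>S) \<longleftrightarrow> (\<exists>s\<in>S. x \<in> \<phi> s))"
    if "S \<subseteq> carrier L" for S
  proof -
    have "?c ` S = (\<lambda>s. ev x (\<phi> s)) ` S" using that by (rule restrict_image)
    then show ?thesis using cS[OF that] by (simp del: ev_simps add: ev_simps(9)) (simp add: ev_def)
  qed
  have E6: "?c (\<Sqinter>\<^bsub>L\<^esub>S) = \<Sqinter>\<^bsub>PowL (UNIV::unit set)\<^esub>(?c ` S) \<longleftrightarrow> (x \<in> \<phi> (\<Sqinter>\<^bsub>L\<^esub>S) \<longleftrightarrow> (\<forall>s\<in>S. x \<in> \<phi> s))"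
    if "S \<subseteq> carrier L" for S
  proof -
    have "?c ` S = (\<lambda>s. ev x (\<phi> s)) ` S" using that by (rule restrict_image)
    then show ?thesis using cI[OF that] by (simp del: ev_simps add: ev_simps(10)) (simp add: ev_def)
  qed
  have E7: "?c a \<sqsubseteq>\<^bsub>PowL (UNIV::unit set)\<^esub> ?c b \<longleftrightarrow> (x \<in> \<phi> a \<longrightarrow> x \<in> \<phi> b)"
    if "a \<in> carrier L" "b \<in> carrier L" for a b using that by simp
  have E8: "?c (infi L I f) = infi (PowL (UNIV::unit set)) I (?c \<circ> f) \<longleftrightarrow> (x \<in> \<phi> (infi L I f) \<longleftrightarrow> (\<forall>i\<in>I. x \<in> \<phi> (f i)))"
    if "f \<in> I \<rightarrow> carrier L" for I f
    using ci[OF that] comp[OF that] by (simp del: ev_simps add: ev_simps(1))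
  have E9: "?c (supr L I f) = supr (PowL (UNIV::unit set)) I (?c \<circ> f) \<longleftrightarrow> (x \<in> \<phi> (supr L I f) \<longleftrightarrow> (\<exists>i\<in>I. x \<in> \<phi> (f i)))"
    if "f \<in> I \<rightarrow> carrier L" for I f
    using ci[OF that] comp[OF that] by (simp del: ev_simps add: ev_simps(1))
  show ?thesis
    unfolding C_hom_def frame_hom_def coframe_hom_def PW_def
    by (cases fr) (simp_all only: E0 E1 E2 E3 E4 E5 E6 E7 E8 E9 if_True if_False simp_thms cong: ball_cong imp_cong conj_cong)
qed


lemma set_eq_X: "A \<subseteq> X \<Longrightarrow> B \<subseteq> X \<Longrightarrow> A = B \<longleftrightarrow> (\<forall>x\<in>X. x \<in> A \<longleftrightarrow> x \<in> B)"
  by blast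

lemma swap2: "(\<And>a b. a \<in> A \<Longrightarrow> b \<in> B a \<Longrightarrow> P a b \<longleftrightarrow> (\<forall>x\<in>X. Q x a b)) \<Longrightarrow>
  (\<forall>a\<in>A. \<forall>b\<in>B a. P a b) \<longleftrightarrow> (\<forall>x\<in>X. \<forall>a\<in>A. \<forall>b\<in>B a. Q x a b)"
  by blast

lemma pw_pow:
  assumes cl: "complete_lattice L" and ph: "\<phi> \<in> carrier L \<rightarrow> Pow X"
  shows "C_hom fr II JJ L (PowL X) (\<lambda>l\<in>carrier L. \<phi> l) \<longleftrightarrow> (\<forall>x\<in>X. PW fr II JJ L \<phi> x)"
proof -
  have cI: "\<Sqinter>\<^bsub>L\<^esub>S \<in> carrier L" if "S \<subseteq> carrier L" for S using cl that by (rule cl_Inf_closed)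
  have cS: "\<Squnion>\<^bsub>L\<^esub>S \<in> carrier L" if "S \<subseteq> carrier L" for S using cl that by (rule cl_Sup_closed)
  have cm: "a \<sqinter>\<^bsub>L\<^esub> b \<in> carrier L" "a \<squnion>\<^bsub>L\<^esub> b \<in> carrier L" if "a \<in> carrier L" "b \<in> carrier L" for a b
    using cl that by (auto intro: cl_meet_closed cl_join_closed)
  have ci: "infi L I f \<in> carrier L" "supr L I f \<in> carrier L" if "f \<in> I \<rightarrow> carrier L" for I f
    using that unfolding infi_def supr_def by (auto intro!: cI cS)
  have pX: "\<phi> l \<subseteq> X" if "l \<in> carrier L" for l using ph that by auto
  let ?c = "\<lambda>l\<in>carrier L. \<phi> l"
  have img: "?c ` S = \<phi> ` S" if "S \<subseteq> carrier L" for S using that by (rule restrict_image)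
  have imgX: "\<phi> ` S \<subseteq> Pow X" if "S \<subseteq> carrier L" for S using that pX by auto
  have compX: "?c \<circ> f \<in> I \<rightarrow> Pow X" "(\<Inter>i\<in>I. (?c \<circ> f) i) = (\<Inter>i\<in>I. \<phi> (f i))"
    "(\<Union>i\<in>I. (?c \<circ> f) i) = (\<Union>i\<in>I. \<phi> (f i))"
    if "f \<in> I \<rightarrow> carrier L" for I f
    using that pX by (auto simp: Pi_iff intro!: INF_cong[OF refl] SUP_cong[OF refl])
  have F0: "?c \<in> carrier L \<rightarrow>\<^sub>E carrier (PowL X)" using pX by auto
  have F1: "?c (\<Sqinter>\<^bsub>L\<^esub>{}) = \<Sqinter>\<^bsub>PowL X\<^esub>{} \<longleftrightarrow> (\<forall>x\<in>X. x \<in> \<phi> (\<Sqinter>\<^bsub>L\<^esub>{}))"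
    using cI[of "{}"] pX[OF cI[of "{}"]] by (auto simp: PowL_Inf)
  have F2: "?c (\<Squnion>\<^bsub>L\<^esub>{}) = \<Squnion>\<^bsub>PowL X\<^esub>{} \<longleftrightarrow> (\<forall>x\<in>X. x \<notin> \<phi> (\<Squnion>\<^bsub>L\<^esub>{}))"
    using cS[of "{}"] pX[OF cS[of "{}"]] by (auto simp: PowL_Sup)
  have F3': "?c (a \<sqinter>\<^bsub>L\<^esub> b) = ?c a \<sqinter>\<^bsub>PowL X\<^esub> ?c b \<longleftrightarrow> (\<forall>x\<in>X. x \<in> \<phi> (a \<sqinter>\<^bsub>L\<^esub> b) \<longleftrightarrow> x \<in> \<phi> a \<and> x \<in> \<phi> b)"
    if "a \<in> carrier L" "b \<in> carrier L" for a b
    using that cm[OF that] pX[OF cm(1)[OF that]] pX[OF that(1)] pX[OF that(2)]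
    by (simp add: PowL_meet) auto
  have F3: "(\<forall>a\<in>carrier L. \<forall>b\<in>carrier L. ?c (a \<sqinter>\<^bsub>L\<^esub> b) = ?c a \<sqinter>\<^bsub>PowL X\<^esub> ?c b) \<longleftrightarrow>
     (\<forall>x\<in>X. \<forall>a\<in>carrier L. \<forall>b\<in>carrier L. x \<in> \<phi> (a \<sqinter>\<^bsub>L\<^esub> b) \<longleftrightarrow> x \<in> \<phi> a \<and> x \<in> \<phi> b)"
    by (rule swap2) (rule F3')
  have F4': "?c (a \<squnion>\<^bsub>L\<^esub> b) = ?c a \<squnion>\<^bsub>PowL X\<^esub> ?c b \<longleftrightarrow> (\<forall>x\<in>X. x \<in> \<phi> (a \<squnion>\<^bsub>L\<^esub> b) \<longleftrightarrow> x \<in> \<phi> a \<or> x \<in> \<phi> b)"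
    if "a \<in> carrier L" "b \<in> carrier L" for a b
    using that cm[OF that] pX[OF cm(2)[OF that]] pX[OF that(1)] pX[OF that(2)]
    by (simp add: PowL_join) auto
  have F4: "(\<forall>a\<in>carrier L. \<forall>b\<in>carrier L. ?c (a \<squnion>\<^bsub>L\<^esub> b) = ?c a \<squnion>\<^bsub>PowL X\<^esub> ?c b) \<longleftrightarrow>
     (\<forall>x\<in>X. \<forall>a\<in>carrier L. \<forall>b\<in>carrier L. x \<in> \<phi> (a \<squnion>\<^bsub>L\<^esub> b) \<longleftrightarrow> x \<in> \<phi> a \<or> x \<in> \<phi> b)"
    by (rule swap2) (rule F4')
  have F5': "?c (\<Squnion>\<^bsub>L\<^esub>S) = \<Squnion>\<^bsub>PowL X\<^esub>(?c ` S) \<longleftrightarrow> (\<forall>x\<in>X. x \<in> \<phi> (\<Squnion>\<^bsub>L\<^esub>S) \<longleftrightarrow> (\<exists>s\<in>S. x \<in> \<phi> s))"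
    if S: "S \<subseteq> carrier L" for S
  proof -
    have UU: "\<Union>(\<phi> ` S) \<subseteq> X" using imgX[OF S] by blast
    then show ?thesis using cS[OF S] img[OF S] imgX[OF S]
      by (simp add: PowL_Sup set_eq_X[OF pX[OF cS[OF S]] UU])
  qed
  have F5: "(\<forall>S. S \<subseteq> carrier L \<longrightarrow> ?c (\<Squnion>\<^bsub>L\<^esub>S) = \<Squnion>\<^bsub>PowL X\<^esub>(?c ` S)) \<longleftrightarrow>
      (\<forall>x\<in>X. \<forall>S. S \<subseteq> carrier L \<longrightarrow> (x \<in> \<phi> (\<Squnion>\<^bsub>L\<^esub>S) \<longleftrightarrow> (\<exists>s\<in>S. x \<in> \<phi> s)))" (is "?A \<longleftrightarrow> ?B")
  proof (rule iffI)
    assume H: ?A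
    show ?B
    proof (rule ballI, rule allI, rule impI)
      fix x S assume x: "x \<in> X" and S: "S \<subseteq> carrier L"
      from H S have "?c (\<Squnion>\<^bsub>L\<^esub>S) = \<Squnion>\<^bsub>PowL X\<^esub>(?c ` S)" by blast
      with F5'[OF S] x show "x \<in> \<phi> (\<Squnion>\<^bsub>L\<^esub>S) \<longleftrightarrow> (\<exists>s\<in>S. x \<in> \<phi> s)" by blast
    qed
  next
    assume H: ?B
    show ?A
    proof (rule allI, rule impI)
      fix S assume S: "S \<subseteq> carrier L"
      then show "?c (\<Squnion>\<^bsub>L\<^esub>S) = \<Squnion>\<^bsub>PowL X\<^esub>(?c ` S)" using H F5'[OF S] by blast
    qed
  qed
  have F6': "?c (\<Sqinter>\<^bsub>L\<^esub>S) = \<Sqinter>\<^bsub>PowL X\<^esub>(?c ` S) \<longleftrightarrow> (\<forall>x\<in>X. x \<in> \<phi> (\<Sqinter>\<^bsub>L\<^esub>S) \<longleftrightarrow> (\<forall>s\<in>S. x \<in> \<phi> s))"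
    if S: "S \<subseteq> carrier L" for S
  proof -
    have UU: "X \<inter> \<Inter>(\<phi> ` S) \<subseteq> X" by blast
    then show ?thesis using cI[OF S] img[OF S] imgX[OF S]
      by (simp add: PowL_Inf set_eq_X[OF pX[OF cI[OF S]] UU])
  qed
  have F6: "(\<forall>S. S \<subseteq> carrier L \<longrightarrow> ?c (\<Sqinter>\<^bsub>L\<^esub>S) = \<Sqinter>\<^bsub>PowL X\<^esub>(?c ` S)) \<longleftrightarrow>
      (\<forall>x\<in>X. \<forall>S. S \<subseteq> carrier L \<longrightarrow> (x \<in> \<phi> (\<Sqinter>\<^bsub>L\<^esub>S) \<longleftrightarrow> (\<forall>s\<in>S. x \<in> \<phi> s)))" (is "?A \<longleftrightarrow> ?B")
  proof (rule iffI)
    assume H: ?A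
    show ?B
    proof (rule ballI, rule allI, rule impI)
      fix x S assume x: "x \<in> X" and S: "S \<subseteq> carrier L"
      from H S have "?c (\<Sqinter>\<^bsub>L\<^esub>S) = \<Sqinter>\<^bsub>PowL X\<^esub>(?c ` S)" by blast
      with F6'[OF S] x show "x \<in> \<phi> (\<Sqinter>\<^bsub>L\<^esub>S) \<longleftrightarrow> (\<forall>s\<in>S. x \<in> \<phi> s)" by blast
    qed
  next
    assume H: ?B
    show ?A
    proof (rule allI, rule impI)
      fix S assume S: "S \<subseteq> carrier L"
      then show "?c (\<Sqinter>\<^bsub>L\<^esub>S) = \<Sqinter>\<^bsub>PowL X\<^esub>(?c ` S)" using H F6'[OF S] by blast
    qed
  qed
  have F7: "(\<forall>a\<in>carrier L. \<forall>b\<in>carrier L. a \<sqsubseteq>\<^bsub>L\<^esub> b \<longrightarrow> ?c a \<sqsubseteq>\<^bsub>PowL X\<^esub> ?c b) \<longleftrightarrow>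
     (\<forall>x\<in>X. \<forall>a\<in>carrier L. \<forall>b\<in>carrier L. a \<sqsubseteq>\<^bsub>L\<^esub> b \<longrightarrow> x \<in> \<phi> a \<longrightarrow> x \<in> \<phi> b)"
    by (rule swap2) (use pX in auto)
  have F8': "?c (infi L I f) = infi (PowL X) I (?c \<circ> f) \<longleftrightarrow> (\<forall>x\<in>X. x \<in> \<phi> (infi L I f) \<longleftrightarrow> (\<forall>i\<in>I. x \<in> \<phi> (f i)))"
    if f: "f \<in> I \<rightarrow> carrier L" for I f
  proof -
    have UU: "X \<inter> (\<Inter>i\<in>I. \<phi> (f i)) \<subseteq> X" by blast
    then show ?thesis using ci[OF f] pX[OF ci(1)[OF f]] compX[OF f]
      by (simp add: PowL_infi) auto
  qed
  have F8: "(\<forall>I\<in>II. \<forall>f\<in>I \<rightarrow> carrier L. ?c (infi L I f) = infi (PowL X) I (?c \<circ> f)) \<longleftrightarrow>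
     (\<forall>x\<in>X. \<forall>I\<in>II. \<forall>f\<in>I \<rightarrow> carrier L. x \<in> \<phi> (infi L I f) \<longleftrightarrow> (\<forall>i\<in>I. x \<in> \<phi> (f i)))"
    by (rule swap2) (rule F8')
  have F9': "?c (supr L I f) = supr (PowL X) I (?c \<circ> f) \<longleftrightarrow> (\<forall>x\<in>X. x \<in> \<phi> (supr L I f) \<longleftrightarrow> (\<exists>i\<in>I. x \<in> \<phi> (f i)))"
    if f: "f \<in> I \<rightarrow> carrier L" for I f
  proof -
    have UU: "(\<Union>i\<in>I. \<phi> (f i)) \<subseteq> X" using f pX by (auto simp: Pi_iff)
    have "?c (supr L I f) = \<phi> (supr L I f)" using ci(2)[OF f] by simp
    moreover have "supr (PowL X) I (?c \<circ> f) = (\<Union>i\<in>I. \<phi> (f i))"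
      using PowL_supr[OF compX(1)[OF f]] compX(3)[OF f] by simp
    ultimately show ?thesis using set_eq_X[OF pX[OF ci(2)[OF f]] UU] by simp
  qed
  have F9: "(\<forall>I\<in>JJ. \<forall>f\<in>I \<rightarrow> carrier L. ?c (supr L I f) = supr (PowL X) I (?c \<circ> f)) \<longleftrightarrow>
     (\<forall>x\<in>X. \<forall>I\<in>JJ. \<forall>f\<in>I \<rightarrow> carrier L. x \<in> \<phi> (supr L I f) \<longleftrightarrow> (\<exists>i\<in>I. x \<in> \<phi> (f i)))"
    by (rule swap2) (rule F9')
  show ?thesis
    unfolding C_hom_def frame_hom_def coframe_hom_def PW_def
    by (cases fr) (simp_all only: F0 F1 F2 F3 F4 F5 F6 F7 F8 F9 if_True if_False simp_thms ball_conj_distrib)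
qed


lemma PW_point:
  assumes y: "y \<in> Y" and h: "\<And>B. B \<subseteq> Y \<Longrightarrow> x \<in> \<phi> B \<longleftrightarrow> y \<in> B"
  shows "PW fr II JJ (PowL Y) \<phi> x"
proof -
  have a: "x \<in> \<phi> (\<Sqinter>\<^bsub>PowL Y\<^esub>{})" using h[of Y] y by (simp add: PowL_Inf)
  have b: "x \<notin> \<phi> (\<Squnion>\<^bsub>PowL Y\<^esub>{})" using h[of "{}"] by (simp add: PowL_Sup)
  have c: "\<forall>a\<in>carrier (PowL Y). \<forall>b\<in>carrier (PowL Y). x \<in> \<phi> (a \<sqinter>\<^bsub>PowL Y\<^esub> b) \<longleftrightarrow> x \<in> \<phi> a \<and> x \<in> \<phi> b"
  proof (intro ballI)
    fix a b assume "a \<in> carrier (PowL Y)" "b \<in> carrier (PowL Y)"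
    then show "x \<in> \<phi> (a \<sqinter>\<^bsub>PowL Y\<^esub> b) \<longleftrightarrow> x \<in> \<phi> a \<and> x \<in> \<phi> b"
      using h[of a] h[of b] h[of "a \<inter> b"] by (auto simp: PowL_meet)
  qed
  have d: "\<forall>a\<in>carrier (PowL Y). \<forall>b\<in>carrier (PowL Y). x \<in> \<phi> (a \<squnion>\<^bsub>PowL Y\<^esub> b) \<longleftrightarrow> x \<in> \<phi> a \<or> x \<in> \<phi> b"
  proof (intro ballI)
    fix a b assume "a \<in> carrier (PowL Y)" "b \<in> carrier (PowL Y)"
    then show "x \<in> \<phi> (a \<squnion>\<^bsub>PowL Y\<^esub> b) \<longleftrightarrow> x \<in> \<phi> a \<or> x \<in> \<phi> b"
      using h[of a] h[of b] h[of "a \<union> b"] by (auto simp: PowL_join)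
  qed
  have e: "\<forall>S. S \<subseteq> carrier (PowL Y) \<longrightarrow> (x \<in> \<phi> (\<Squnion>\<^bsub>PowL Y\<^esub>S) \<longleftrightarrow> (\<exists>s\<in>S. x \<in> \<phi> s))"
  proof (intro allI impI)
    fix S assume S: "S \<subseteq> carrier (PowL Y)"
    then have U: "\<Union>S \<subseteq> Y" by auto
    have "\<forall>s\<in>S. x \<in> \<phi> s \<longleftrightarrow> y \<in> s" using S h by auto
    then show "x \<in> \<phi> (\<Squnion>\<^bsub>PowL Y\<^esub>S) \<longleftrightarrow> (\<exists>s\<in>S. x \<in> \<phi> s)"
      using S h[OF U] by (auto simp: PowL_Sup)
  qed
  have f: "\<forall>S. S \<subseteq> carrier (PowL Y) \<longrightarrow> (x \<in> \<phi> (\<Sqinter>\<^bsub>PowL Y\<^esub>S) \<longleftrightarrow> (\<forall>s\<in>S. x \<in> \<phi> s))"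
  proof (intro allI impI)
    fix S assume S: "S \<subseteq> carrier (PowL Y)"
    have U: "Y \<inter> \<Inter>S \<subseteq> Y" by auto
    have "\<forall>s\<in>S. x \<in> \<phi> s \<longleftrightarrow> y \<in> s" using S h by auto
    then show "x \<in> \<phi> (\<Sqinter>\<^bsub>PowL Y\<^esub>S) \<longleftrightarrow> (\<forall>s\<in>S. x \<in> \<phi> s)"
      using S h[OF U] y by (auto simp: PowL_Inf)
  qed
  have g: "\<forall>a\<in>carrier (PowL Y). \<forall>b\<in>carrier (PowL Y). a \<sqsubseteq>\<^bsub>PowL Y\<^esub> b \<longrightarrow> x \<in> \<phi> a \<longrightarrow> x \<in> \<phi> b"
    using h by auto
  have i: "\<forall>I\<in>II. \<forall>f\<in>I \<rightarrow> carrier (PowL Y). x \<in> \<phi> (infi (PowL Y) I f) \<longleftrightarrow> (\<forall>i\<in>I. x \<in> \<phi> (f i))"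
  proof (intro ballI)
    fix I f assume "f \<in> I \<rightarrow> carrier (PowL Y)"
    then have f: "f \<in> I \<rightarrow> Pow Y" by simp
    have "Y \<inter> (\<Inter>i\<in>I. f i) \<subseteq> Y" by auto
    then have U: "Y \<inter> (\<Inter>i\<in>I. f i) \<subseteq> Y" by auto
    have "\<forall>i\<in>I. x \<in> \<phi> (f i) \<longleftrightarrow> y \<in> f i"
    proof
      fix i assume "i \<in> I" then have "f i \<subseteq> Y" using f by auto
      then show "x \<in> \<phi> (f i) \<longleftrightarrow> y \<in> f i" by (rule h)
    qed
    then show "x \<in> \<phi> (infi (PowL Y) I f) \<longleftrightarrow> (\<forall>i\<in>I. x \<in> \<phi> (f i))"
      using f h[OF U] y by (auto simp: PowL_infi)
  qed
  have j: "\<forall>I\<in>JJ. \<forall>f\<in>I \<rightarrow> carrier (PowL Y). x \<in> \<phi> (supr (PowL Y) I f) \<longleftrightarrow> (\<exists>i\<in>I. x \<in> \<phi> (f i))"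
  proof (intro ballI)
    fix I f assume "f \<in> I \<rightarrow> carrier (PowL Y)"
    then have f: "f \<in> I \<rightarrow> Pow Y" by simp
    then have "(\<Union>i\<in>I. f i) \<subseteq> Y" by auto
    then have U: "(\<Union>i\<in>I. f i) \<subseteq> Y" by auto
    have "\<forall>i\<in>I. x \<in> \<phi> (f i) \<longleftrightarrow> y \<in> f i"
    proof
      fix i assume "i \<in> I" then have "f i \<subseteq> Y" using f by auto
      then show "x \<in> \<phi> (f i) \<longleftrightarrow> y \<in> f i" by (rule h)
    qed
    then show "x \<in> \<phi> (supr (PowL Y) I f) \<longleftrightarrow> (\<exists>i\<in>I. x \<in> \<phi> (f i))"
      using f h[OF U] by (auto simp: PowL_supr)
  qed
  show ?thesis
  proof (cases fr)
    case True
    show ?thesis unfolding PW_def if_P[OF True] using a c e g i j by (intro conjI)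
  next
    case False
    show ?thesis unfolding PW_def if_not_P[OF False] using b d f g i j by (intro conjI)
  qed
qed

lemma point_PW:
  assumes pw: "PW fr II JJ (PowL Y) \<phi> x"
  shows "\<exists>y\<in>Y. \<forall>B. B \<subseteq> Y \<longrightarrow> (x \<in> \<phi> B \<longleftrightarrow> y \<in> B)"
proof (cases fr)
  case True
  then have t: "x \<in> \<phi> Y" and m: "\<And>a b. a \<subseteq> Y \<Longrightarrow> b \<subseteq> Y \<Longrightarrow> x \<in> \<phi> (a \<inter> b) \<longleftrightarrow> x \<in> \<phi> a \<and> x \<in> \<phi> b"
    and s: "\<And>S. S \<subseteq> Pow Y \<Longrightarrow> x \<in> \<phi> (\<Union>S) \<longleftrightarrow> (\<exists>s\<in>S. x \<in> \<phi> s)"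
    and mo: "\<And>a b. a \<subseteq> Y \<Longrightarrow> b \<subseteq> Y \<Longrightarrow> a \<subseteq> b \<Longrightarrow> x \<in> \<phi> a \<Longrightarrow> x \<in> \<phi> b"
    using pw unfolding PW_def by (auto simp: PowL_Inf PowL_meet PowL_Sup)
  have "Y = \<Union>((\<lambda>y. {y}) ` Y)" by auto
  then have "x \<in> \<phi> (\<Union>((\<lambda>y. {y}) ` Y))" using t by simp
  then obtain y where y: "y \<in> Y" "x \<in> \<phi> {y}" using s[of "(\<lambda>y. {y}) ` Y"] by auto
  have e: "x \<notin> \<phi> {}" using s[of "{}"] by simp
  show ?thesis
  proof (intro bexI[OF _ y(1)] allI impI)
    fix B assume B: "B \<subseteq> Y"
    show "x \<in> \<phi> B \<longleftrightarrow> y \<in> B"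
    proof
      assume "x \<in> \<phi> B"
      then have "x \<in> \<phi> ({y} \<inter> B)" using m[of "{y}" B] y B by auto
      then show "y \<in> B" using e by (cases "y \<in> B") auto
    next
      assume "y \<in> B" then show "x \<in> \<phi> B" using mo[of "{y}" B] y B by auto
    qed
  qed
next
  case False
  then have b: "x \<notin> \<phi> {}" and j: "\<And>a b. a \<subseteq> Y \<Longrightarrow> b \<subseteq> Y \<Longrightarrow> x \<in> \<phi> (a \<union> b) \<longleftrightarrow> x \<in> \<phi> a \<or> x \<in> \<phi> b"
    and s: "\<And>S. S \<subseteq> Pow Y \<Longrightarrow> x \<in> \<phi> (Y \<inter> \<Inter>S) \<longleftrightarrow> (\<forall>s\<in>S. x \<in> \<phi> s)"
    and mo: "\<And>a b. a \<subseteq> Y \<Longrightarrow> b \<subseteq> Y \<Longrightarrow> a \<subseteq> b \<Longrightarrow> x \<in> \<phi> a \<Longrightarrow> x \<in> \<phi> b"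
    using pw unfolding PW_def by (auto simp: PowL_Sup PowL_join PowL_Inf)
  have "Y \<inter> \<Inter>((\<lambda>y. Y - {y}) ` Y) = {}" by auto
  then have "x \<notin> \<phi> (Y \<inter> \<Inter>((\<lambda>y. Y - {y}) ` Y))" using b by simp
  then obtain y where y: "y \<in> Y" "x \<notin> \<phi> (Y - {y})" using s[of "(\<lambda>y. Y - {y}) ` Y"] by auto
  have tY: "x \<in> \<phi> Y" using s[of "{}"] by simp
  show ?thesis
  proof (intro bexI[OF _ y(1)] allI impI)
    fix B assume B: "B \<subseteq> Y"
    show "x \<in> \<phi> B \<longleftrightarrow> y \<in> B"
    proof
      assume "x \<in> \<phi> B"
      then show "y \<in> B" using mo[of B "Y - {y}"] y B by auto
    next
      assume yB: "y \<in> B"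
      then have "B \<union> (Y - {y}) = Y" using B by auto
      then show "x \<in> \<phi> B" using j[of B "Y - {y}"] tY y B by auto
    qed
  qed
qed


lemma part1: "conv_space X cvX \<Longrightarrow> C_obj fr (PowL X) \<and> conv_lim (PowL X) (pow_lim X cvX)"
proof -
  assume X: "conv_space X cvX"
  have "conv_lim (PowL X) (pow_lim X cvX)"
    unfolding conv_lim_def
  proof (intro conjI allI impI)
    fix F assume "lat_filter (PowL X) F"
    show "pow_lim X cvX F \<in> carrier (PowL X)" by (auto simp: pow_lim_def)
  next
    fix F G assume H: "lat_filter (PowL X) F \<and> lat_filter (PowL X) G \<and> F \<subseteq> G"
    have "\<And>x. cvX F x \<Longrightarrow> cvX G x" using X H unfolding conv_space_def by blast
    then show "pow_lim X cvX F \<sqsubseteq>\<^bsub>PowL X\<^esub> pow_lim X cvX G" by (auto simp: pow_lim_def)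
  qed
  then show ?thesis by (simp add: PowL_Cobj)
qed

lemma pow_map_eq: "pow_map X Y f = (\<lambda>l\<in>carrier (PowL Y). {x \<in> X. f x \<in> l})"
  by (simp add: pow_map_def)

lemma img_filter_eq: "{l \<in> carrier (PowL Y). pow_map X Y f l \<in> F} = img_filter X Y f F"
  by (auto simp: pow_map_def img_filter_def)

lemma pow_map_hom:
  assumes f: "f \<in> X \<rightarrow> Y"
  shows "C_hom fr II JJ (PowL Y) (PowL X) (pow_map X Y f)"
proof -
  have "\<forall>x\<in>X. PW fr II JJ (PowL Y) (\<lambda>l. {x \<in> X. f x \<in> l}) x"
  proof
    fix x assume x: "x \<in> X"
    show "PW fr II JJ (PowL Y) (\<lambda>l. {x \<in> X. f x \<in> l}) x"
      by (rule PW_point[of "f x"]) (use f x in auto)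
  qed
  moreover have "(\<lambda>l. {x \<in> X. f x \<in> l}) \<in> carrier (PowL Y) \<rightarrow> Pow X" by auto
  ultimately show ?thesis unfolding pow_map_eq using pw_pow[OF PowL_cl] by blast
qed

lemma part2:
  assumes "conv_space X cvX" "conv_space Y cvY" and c: "continuous_conv X cvX Y cvY f"
  shows "Cconv_hom fr II JJ (PowL Y) (pow_lim Y cvY) (PowL X) (pow_lim X cvX) (pow_map X Y f)"
  unfolding Cconv_hom_def
proof (intro conjI allI impI)
  have f: "f \<in> X \<rightarrow>\<^sub>E Y" using c by (simp add: continuous_conv_def)
  then show "C_hom fr II JJ (PowL Y) (PowL X) (pow_map X Y f)" by (intro pow_map_hom) auto
  fix F assume F: "lat_filter (PowL X) F"
  have "pow_lim Y cvY (img_filter X Y f F) \<subseteq> Y" by (auto simp: pow_lim_def)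
  then have "pow_map X Y f (pow_lim Y cvY (img_filter X Y f F)) = {x \<in> X. cvY (img_filter X Y f F) (f x)}"
    using f by (auto simp: pow_map_def pow_lim_def)
  moreover have "pow_lim X cvX F \<subseteq> {x \<in> X. cvY (img_filter X Y f F) (f x)}"
    using c by (auto simp: pow_lim_def continuous_conv_def)
  ultimately show "pow_lim X cvX F \<sqsubseteq>\<^bsub>PowL X\<^esub> pow_map X Y f (pow_lim Y cvY {l \<in> carrier (PowL Y). pow_map X Y f l \<in> F})"
    by (subst img_filter_eq) simp
qed

lemma part3:
  assumes X: "conv_space X cvX" and Y: "conv_space Y cvY"
  shows "bij_betw (pow_map X Y) {f. continuous_conv X cvX Y cvY f}
        {\<phi>. Cconv_hom fr II JJ (PowL Y) (pow_lim Y cvY) (PowL X) (pow_lim X cvX) \<phi>}"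
  unfolding bij_betw_def
proof (intro conjI)
  show "inj_on (pow_map X Y) {f. continuous_conv X cvX Y cvY f}"
  proof (rule inj_onI)
    fix f g assume f: "f \<in> {f. continuous_conv X cvX Y cvY f}" and g: "g \<in> {f. continuous_conv X cvX Y cvY f}"
      and e: "pow_map X Y f = pow_map X Y g"
    from f g have fE: "f \<in> X \<rightarrow>\<^sub>E Y" and gE: "g \<in> X \<rightarrow>\<^sub>E Y" by (auto simp: continuous_conv_def)
    show "f = g"
    proof
      fix x show "f x = g x"
      proof (cases "x \<in> X")
        case True
        then have "{f x} \<subseteq> Y" using fE by auto
        then have "pow_map X Y f {f x} = pow_map X Y g {f x}" using e by simp
        then have eq: "{z \<in> X. f z \<in> {f x}} = {z \<in> X. g z \<in> {f x}}" using \<open>{f x} \<subseteq> Y\<close> by (simp add: pow_map_def)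
        have mem: "x \<in> {z \<in> X. f z \<in> {f x}}" using True by blast
        have "x \<in> {z \<in> X. g z \<in> {f x}}" using mem unfolding eq .
        then have "g x = f x" by (simp only: mem_Collect_eq singleton_iff)
        then show ?thesis by (rule sym)
      next
        case False show ?thesis using PiE_arb[OF fE False] PiE_arb[OF gE False] by (rule trans_sym)
      qed
    qed
  qed
next
  show "pow_map X Y ` {f. continuous_conv X cvX Y cvY f} =
        {\<phi>. Cconv_hom fr II JJ (PowL Y) (pow_lim Y cvY) (PowL X) (pow_lim X cvX) \<phi>}"
  proof (intro equalityI subsetI)
    fix \<phi> assume "\<phi> \<in> pow_map X Y ` {f. continuous_conv X cvX Y cvY f}"
    then show "\<phi> \<in> {\<phi>. Cconv_hom fr II JJ (PowL Y) (pow_lim Y cvY) (PowL X) (pow_lim X cvX) \<phi>}"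
    proof -
      from \<open>\<phi> \<in> pow_map X Y ` {f. continuous_conv X cvX Y cvY f}\<close> obtain f
        where "continuous_conv X cvX Y cvY f" "\<phi> = pow_map X Y f" by blast
      then show ?thesis using part2[OF X Y] by simp
    qed
  next
    fix \<phi> assume "\<phi> \<in> {\<phi>. Cconv_hom fr II JJ (PowL Y) (pow_lim Y cvY) (PowL X) (pow_lim X cvX) \<phi>}"
    then have H: "Cconv_hom fr II JJ (PowL Y) (pow_lim Y cvY) (PowL X) (pow_lim X cvX) \<phi>" by simp
    then have C: "C_hom fr II JJ (PowL Y) (PowL X) \<phi>" by (simp add: Cconv_hom_def)
    then have pE: "\<phi> \<in> Pow Y \<rightarrow>\<^sub>E Pow X" by (simp add: C_hom_def)
    then have req: "(\<lambda>l\<in>carrier (PowL Y). \<phi> l) = \<phi>" by (auto simp: extensional_restrict)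
    have "\<phi> \<in> carrier (PowL Y) \<rightarrow> Pow X" using pE by auto
    then have "C_hom fr II JJ (PowL Y) (PowL X) (\<lambda>l\<in>carrier (PowL Y). \<phi> l) \<longleftrightarrow> (\<forall>x\<in>X. PW fr II JJ (PowL Y) \<phi> x)"
      by (rule pw_pow[OF PowL_cl])
    then have "\<forall>x\<in>X. PW fr II JJ (PowL Y) \<phi> x" using C unfolding req by simp
    then have ex: "\<forall>x\<in>X. \<exists>y\<in>Y. \<forall>B. B \<subseteq> Y \<longrightarrow> (x \<in> \<phi> B \<longleftrightarrow> y \<in> B)"
      using point_PW by fast
    define f where "f x = (if x \<in> X then (THE y. y \<in> Y \<and> (\<forall>B. B \<subseteq> Y \<longrightarrow> (x \<in> \<phi> B \<longleftrightarrow> y \<in> B))) else undefined)" for x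
    have fx: "f x \<in> Y \<and> (\<forall>B. B \<subseteq> Y \<longrightarrow> (x \<in> \<phi> B \<longleftrightarrow> f x \<in> B))" if x: "x \<in> X" for x
    proof -
      from ex x obtain y where y: "y \<in> Y \<and> (\<forall>B. B \<subseteq> Y \<longrightarrow> (x \<in> \<phi> B \<longleftrightarrow> y \<in> B))" by blast
      have "(THE y. y \<in> Y \<and> (\<forall>B. B \<subseteq> Y \<longrightarrow> (x \<in> \<phi> B \<longleftrightarrow> y \<in> B))) = y"
      proof (rule the_equality)
        show "y \<in> Y \<and> (\<forall>B. B \<subseteq> Y \<longrightarrow> (x \<in> \<phi> B \<longleftrightarrow> y \<in> B))" by (rule y)
        fix y' assume y': "y' \<in> Y \<and> (\<forall>B. B \<subseteq> Y \<longrightarrow> (x \<in> \<phi> B \<longleftrightarrow> y' \<in> B))"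
        then have "x \<in> \<phi> {y} \<longleftrightarrow> y' \<in> {y}" using y by auto
        then show "y' = y" using y by auto
      qed
      then show ?thesis using y x by (simp add: f_def)
    qed
    have fE: "f \<in> X \<rightarrow>\<^sub>E Y"
    proof (rule PiE_I)
      fix x assume "x \<in> X" then show "f x \<in> Y" using fx by blast
    next
      fix x assume "x \<notin> X" then show "f x = undefined" by (simp add: f_def)
    qed
    have peq: "pow_map X Y f = \<phi>"
    proof
      fix B show "pow_map X Y f B = \<phi> B"
      proof (cases "B \<subseteq> Y")
        case True
        have "\<phi> B \<subseteq> X" using pE True by auto
        then show ?thesis using True fx by (auto simp: pow_map_def)
      next
        case False then show ?thesis using pE by (auto simp: pow_map_def)
      qed
    qed
    have "continuous_conv X cvX Y cvY f"
      unfolding continuous_conv_def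
    proof (intro conjI allI impI)
      show "f \<in> X \<rightarrow>\<^sub>E Y" by (rule fE)
      fix F x assume cv: "cvX F x"
      have F: "lat_filter (PowL X) F" and x: "x \<in> X" using X cv unfolding conv_space_def by blast+
      have "pow_lim X cvX F \<sqsubseteq>\<^bsub>PowL X\<^esub> \<phi> (pow_lim Y cvY {l \<in> carrier (PowL Y). \<phi> l \<in> F})"
        using H F by (simp add: Cconv_hom_def)
      moreover have "{l \<in> carrier (PowL Y). \<phi> l \<in> F} = img_filter X Y f F"
        using img_filter_eq[of Y X f F] peq by simp
      moreover have "x \<in> pow_lim X cvX F" using cv x by (simp add: pow_lim_def)
      ultimately have "x \<in> \<phi> (pow_lim Y cvY (img_filter X Y f F))" by auto
      moreover have "pow_lim Y cvY (img_filter X Y f F) \<subseteq> Y" by (auto simp: pow_lim_def)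
      ultimately have "f x \<in> pow_lim Y cvY (img_filter X Y f F)" using fx[OF x] by blast
      then show "cvY (img_filter X Y f F) (f x)" by (simp add: pow_lim_def)
    qed
    then show "\<phi> \<in> pow_map X Y ` {f. continuous_conv X cvX Y cvY f}" using peq by blast
  qed
qed


lemma P1_filter_UNIV: "lat_filter (PowL (UNIV::'u set)) F \<Longrightarrow> UNIV \<in> F"
  using filter_top[OF PowL_cl] by fastforce

lemma pt_mem: "\<psi> \<in> pt fr II JJ L lim \<longleftrightarrow> C_hom fr II JJ L (PowL (UNIV::unit set)) \<psi> \<and>
   (\<forall>F. lat_filter (PowL (UNIV::unit set)) F \<longrightarrow> \<psi> (lim {l \<in> carrier L. \<psi> l \<in> F}) = UNIV)"
  unfolding pt_def Cconv_hom_def by (auto simp: top_unique)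

lemma pt_hom: "\<psi> \<in> pt fr II JJ L lim \<Longrightarrow> C_hom fr II JJ L (PowL (UNIV::unit set)) \<psi>"
  by (simp add: pt_mem)

lemma pt_lim: "\<psi> \<in> pt fr II JJ L lim \<Longrightarrow> lat_filter (PowL (UNIV::unit set)) F \<Longrightarrow> \<psi> (lim {l \<in> carrier L. \<psi> l \<in> F}) = UNIV"
  by (simp add: pt_mem)

lemma bullet_mem: "\<psi> \<in> bullet fr II JJ L lim l \<longleftrightarrow> \<psi> \<in> pt fr II JJ L lim \<and> \<psi> l = UNIV"
  by (simp add: bullet_def)

lemma bullet_sub: "bullet fr II JJ L lim l \<subseteq> pt fr II JJ L lim"
  by (auto simp: bullet_def)

lemma pt_restrict:
  assumes "\<psi> \<in> pt fr II JJ L lim"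
  shows "(\<lambda>l\<in>carrier L. ev \<psi> (bullet fr II JJ L lim l)) = \<psi>"
proof
  fix l show "(\<lambda>l\<in>carrier L. ev \<psi> (bullet fr II JJ L lim l)) l = \<psi> l"
  proof (cases "l \<in> carrier L")
    case True
    then show ?thesis using assms unit_set_cases[of "\<psi> l"] by (auto simp: ev_def bullet_mem)
  next
    case False
    then show ?thesis using Chom_ext[OF pt_hom[OF assms] False] by simp
  qed
qed

lemma counit_hom:
  assumes cl: "complete_lattice L"
  shows "C_hom fr II JJ L (PowL (pt fr II JJ L lim)) (counit fr II JJ L lim)"
proof -
  have a: "bullet fr II JJ L lim \<in> carrier L \<rightarrow> Pow (pt fr II JJ L lim)" by (auto simp: bullet_mem)
  have "PW fr II JJ L (bullet fr II JJ L lim) \<psi>" if "\<psi> \<in> pt fr II JJ L lim" for \<psi>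
    using pw_one[OF cl, of fr II JJ \<psi> "bullet fr II JJ L lim"] pt_restrict[OF that] pt_hom[OF that] by simp
  then show ?thesis unfolding counit_def using pw_pow[OF cl a] by blast
qed

lemma circ_eq: "circ fr II JJ L lim F = {l \<in> carrier L. counit fr II JJ L lim l \<in> F}"
  by (auto simp: circ_def counit_def)

lemma circ_filter:
  assumes cl: "complete_lattice L" and F: "set_filter (pt fr II JJ L lim) F"
  shows "lat_filter L (circ fr II JJ L lim F)"
  unfolding circ_eq by (rule preimage_filter[OF cl PowL_cl counit_hom[OF cl] F])

lemma lim_closed: "conv_lim L lim \<Longrightarrow> lat_filter L F \<Longrightarrow> lim F \<in> carrier L"
  by (simp add: conv_lim_def)

lemma lim_mono: "conv_lim L lim \<Longrightarrow> lat_filter L F \<Longrightarrow> lat_filter L G \<Longrightarrow> F \<subseteq> G \<Longrightarrow> lim F \<sqsubseteq>\<^bsub>L\<^esub> lim G"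
  by (simp add: conv_lim_def)

lemma principal_filter: "x \<in> X \<Longrightarrow> set_filter X {S. S \<subseteq> X \<and> x \<in> S}"
  unfolding lat_filter_def by (auto simp: PowL_meet)

lemma part4:
  assumes Lo: "C_obj fr L" and cl0: "conv_lim L lim"
  shows "conv_space (pt fr II JJ L lim) (pt_conv fr II JJ L lim)"
  unfolding conv_space_def
proof (intro conjI allI impI ballI)
  have cl: "complete_lattice L" using Lo by (rule Cobj_cl)
  fix F \<psi> assume "pt_conv fr II JJ L lim F \<psi>"
  then show "set_filter (pt fr II JJ L lim) F"
    unfolding pt_conv_def by simp
next
  fix F \<psi> assume "pt_conv fr II JJ L lim F \<psi>"
  then show "\<psi> \<in> pt fr II JJ L lim"
    unfolding pt_conv_def by (auto simp: bullet_mem)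
next
  fix \<psi> assume psi: "\<psi> \<in> pt fr II JJ L lim"
  let ?F = "{S. S \<subseteq> pt fr II JJ L lim \<and> \<psi> \<in> S}"
  have "circ fr II JJ L lim ?F = {l \<in> carrier L. \<psi> l \<in> {UNIV}}"
    using psi by (auto simp: circ_def bullet_mem)
  moreover have "lat_filter (PowL (UNIV::unit set)) {UNIV}"
    unfolding lat_filter_def by auto
  then have "\<psi> (lim {l \<in> carrier L. \<psi> l \<in> {UNIV}}) = UNIV" by (rule pt_lim[OF psi])
  ultimately have "\<psi> (lim (circ fr II JJ L lim ?F)) = UNIV" by simp
  then show "pt_conv fr II JJ L lim ?F \<psi>"
    unfolding pt_conv_def using principal_filter[OF psi] psi by (simp add: bullet_mem)
next
  have cl: "complete_lattice L" using Lo by (rule Cobj_cl)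
  fix F G \<psi> assume H: "pt_conv fr II JJ L lim F \<psi> \<and> set_filter (pt fr II JJ L lim) G \<and> F \<subseteq> G"
  then have F: "set_filter (pt fr II JJ L lim) F" and G: "set_filter (pt fr II JJ L lim) G"
    and FG: "F \<subseteq> G" and psi: "\<psi> \<in> pt fr II JJ L lim"
    and v: "\<psi> (lim (circ fr II JJ L lim F)) = UNIV"
    unfolding pt_conv_def by (auto simp: bullet_mem)
  have cF: "lat_filter L (circ fr II JJ L lim F)" by (rule circ_filter[OF cl F])
  have cG: "lat_filter L (circ fr II JJ L lim G)" by (rule circ_filter[OF cl G])
  have sub: "circ fr II JJ L lim F \<subseteq> circ fr II JJ L lim G" using FG by (auto simp: circ_def)
  have "lim (circ fr II JJ L lim F) \<sqsubseteq>\<^bsub>L\<^esub> lim (circ fr II JJ L lim G)"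
    by (rule lim_mono[OF cl0 cF cG sub])
  then have "\<psi> (lim (circ fr II JJ L lim F)) \<subseteq> \<psi> (lim (circ fr II JJ L lim G))"
    using Chom_mono[OF pt_hom[OF psi]] lim_closed[OF cl0 cF] lim_closed[OF cl0 cG] by simp
  then have "\<psi> (lim (circ fr II JJ L lim G)) = UNIV" using v by auto
  then show "pt_conv fr II JJ L lim G \<psi>" unfolding pt_conv_def using G psi by (simp add: bullet_mem)
qed


lemma img_set_filter:
  assumes f: "f \<in> X \<rightarrow> Y" and F: "set_filter X F"
  shows "set_filter Y (img_filter X Y f F)"
proof -
  have "lat_filter (PowL Y) {l \<in> carrier (PowL Y). pow_map X Y f l \<in> F}"
    by (rule preimage_filter[OF PowL_cl PowL_cl pow_map_hom[OF f, of True "{}::unit set set" "{}::unit set set"] F])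
  then show ?thesis by (simp only: img_filter_eq)
qed

context
  fixes fr :: bool and II :: "'i set set" and JJ :: "'j set set"
    and L :: "'a gorder" and lim and L' :: "'b gorder" and lim' and \<phi>
  assumes Lo: "C_obj fr L" and cl0: "conv_lim L lim" and Lo': "C_obj fr L'" and cl0': "conv_lim L' lim'"
    and ph: "Cconv_hom fr II JJ L lim L' lim' \<phi>"
begin

lemma cl: "complete_lattice L" using Lo by (rule Cobj_cl)
lemma cl': "complete_lattice L'" using Lo' by (rule Cobj_cl)
lemma phC: "C_hom fr II JJ L L' \<phi>" using ph by (simp add: Cconv_hom_def)
lemma phlim: "lat_filter L' G \<Longrightarrow> lim' G \<sqsubseteq>\<^bsub>L'\<^esub> \<phi> (lim {l \<in> carrier L. \<phi> l \<in> G})"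
  using ph by (simp add: Cconv_hom_def)

lemma comp_pt:
  assumes psi: "\<psi> \<in> pt fr II JJ L' lim'"
  shows "(\<lambda>l\<in>carrier L. \<psi> (\<phi> l)) \<in> pt fr II JJ L lim"
  unfolding pt_mem
proof (intro conjI allI impI)
  show hc: "C_hom fr II JJ L (PowL (UNIV::unit set)) (\<lambda>l\<in>carrier L. \<psi> (\<phi> l))"
    by (rule Chom_comp[OF cl cl' phC pt_hom[OF psi]])
  fix F assume F: "lat_filter (PowL (UNIV::unit set)) F"
  let ?G = "{l' \<in> carrier L'. \<psi> l' \<in> F}"
  have G: "lat_filter L' ?G" by (rule preimage_filter[OF cl' PowL_cl pt_hom[OF psi] F])
  have eq: "{l \<in> carrier L. \<phi> l \<in> ?G} = {l \<in> carrier L. (\<lambda>l\<in>carrier L. \<psi> (\<phi> l)) l \<in> F}"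
    using Chom_fun[OF phC] by auto
  have H: "lat_filter L {l \<in> carrier L. \<phi> l \<in> ?G}" by (rule preimage_filter[OF cl cl' phC G])
  have m: "lim' ?G \<sqsubseteq>\<^bsub>L'\<^esub> \<phi> (lim {l \<in> carrier L. \<phi> l \<in> ?G})" by (rule phlim[OF G])
  have c1: "lim' ?G \<in> carrier L'" by (rule lim_closed[OF cl0' G])
  have c2: "lim {l \<in> carrier L. \<phi> l \<in> ?G} \<in> carrier L" by (rule lim_closed[OF cl0 H])
  have "\<psi> (lim' ?G) \<subseteq> \<psi> (\<phi> (lim {l \<in> carrier L. \<phi> l \<in> ?G}))"
    using Chom_mono[OF pt_hom[OF psi] c1 Chom_fun[OF phC c2] m] by simp
  moreover have "\<psi> (lim' ?G) = UNIV" by (rule pt_lim[OF psi F])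
  ultimately have "\<psi> (\<phi> (lim {l \<in> carrier L. \<phi> l \<in> ?G})) = UNIV" by auto
  then show "(\<lambda>l\<in>carrier L. \<psi> (\<phi> l)) (lim {l \<in> carrier L. (\<lambda>l\<in>carrier L. \<psi> (\<phi> l)) l \<in> F}) = UNIV"
    using c2 unfolding eq by simp
qed

lemma ptmap_val: "\<psi> \<in> pt fr II JJ L' lim' \<Longrightarrow> pt_map fr II JJ L lim L' lim' \<phi> \<psi> = (\<lambda>l\<in>carrier L. \<psi> (\<phi> l))"
  by (simp add: pt_map_def)

lemma ptmap_fun: "pt_map fr II JJ L lim L' lim' \<phi> \<in> pt fr II JJ L' lim' \<rightarrow>\<^sub>E pt fr II JJ L lim"
  using comp_pt by (auto simp: pt_map_def)

lemma ptmap_bullet: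
  assumes psi: "\<psi> \<in> pt fr II JJ L' lim'" and l: "l \<in> carrier L"
  shows "pt_map fr II JJ L lim L' lim' \<phi> \<psi> \<in> bullet fr II JJ L lim l \<longleftrightarrow> \<psi> (\<phi> l) = UNIV"
  using comp_pt[OF psi] l by (simp add: ptmap_val[OF psi] bullet_mem)

lemma ptmap_pre:
  assumes l: "l \<in> carrier L"
  shows "{\<psi> \<in> pt fr II JJ L' lim'. pt_map fr II JJ L lim L' lim' \<phi> \<psi> \<in> bullet fr II JJ L lim l}
    = bullet fr II JJ L' lim' (\<phi> l)"
proof (rule Set.set_eqI)
  fix \<psi>
  have "\<psi> \<in> bullet fr II JJ L' lim' (\<phi> l) \<longleftrightarrow> \<psi> \<in> pt fr II JJ L' lim' \<and> \<psi> (\<phi> l) = UNIV" by (rule bullet_mem)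
  then show "\<psi> \<in> {\<psi> \<in> pt fr II JJ L' lim'. pt_map fr II JJ L lim L' lim' \<phi> \<psi> \<in> bullet fr II JJ L lim l}
    \<longleftrightarrow> \<psi> \<in> bullet fr II JJ L' lim' (\<phi> l)" using ptmap_bullet[OF _ l, of \<psi>] by blast
qed

lemma part5a:
  "continuous_conv (pt fr II JJ L' lim') (pt_conv fr II JJ L' lim') (pt fr II JJ L lim) (pt_conv fr II JJ L lim)
     (pt_map fr II JJ L lim L' lim' \<phi>)"
  unfolding continuous_conv_def
proof (intro conjI allI impI)
  show "pt_map fr II JJ L lim L' lim' \<phi> \<in> pt fr II JJ L' lim' \<rightarrow>\<^sub>E pt fr II JJ L lim" by (rule ptmap_fun)
  fix F \<psi> assume cv: "pt_conv fr II JJ L' lim' F \<psi>"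
  then have F: "set_filter (pt fr II JJ L' lim') F" and psi: "\<psi> \<in> pt fr II JJ L' lim'"
    and v: "\<psi> (lim' (circ fr II JJ L' lim' F)) = UNIV"
    unfolding pt_conv_def by (auto simp: bullet_mem)
  let ?I = "img_filter (pt fr II JJ L' lim') (pt fr II JJ L lim) (pt_map fr II JJ L lim L' lim' \<phi>) F"
  have I: "set_filter (pt fr II JJ L lim) ?I"
    by (rule img_set_filter[OF _ F]) (use ptmap_fun in auto)
  have ceq: "circ fr II JJ L lim ?I = {l \<in> carrier L. \<phi> l \<in> circ fr II JJ L' lim' F}"
  proof -
    have "circ fr II JJ L lim ?I = {l \<in> carrier L. bullet fr II JJ L' lim' (\<phi> l) \<in> F}"
      unfolding circ_def img_filter_def
    proof (rule Collect_cong)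
      fix l
      show "(l \<in> carrier L \<and> bullet fr II JJ L lim l \<in> {B. B \<subseteq> pt fr II JJ L lim \<and>
         {x \<in> pt fr II JJ L' lim'. pt_map fr II JJ L lim L' lim' \<phi> x \<in> B} \<in> F}) \<longleftrightarrow>
        (l \<in> carrier L \<and> bullet fr II JJ L' lim' (\<phi> l) \<in> F)"
        using ptmap_pre[of l] bullet_sub[of fr II JJ L lim l] by auto
    qed
    also have "\<dots> = {l \<in> carrier L. \<phi> l \<in> circ fr II JJ L' lim' F}"
      using Chom_fun[OF phC] by (auto simp: circ_def)
    finally show ?thesis .
  qed
  have cF: "lat_filter L' (circ fr II JJ L' lim' F)" by (rule circ_filter[OF cl' F])
  have m: "lim' (circ fr II JJ L' lim' F) \<sqsubseteq>\<^bsub>L'\<^esub> \<phi> (lim (circ fr II JJ L lim ?I))"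
    unfolding ceq by (rule phlim[OF cF])
  have cI: "lat_filter L (circ fr II JJ L lim ?I)" by (rule circ_filter[OF cl I])
  have c2: "lim (circ fr II JJ L lim ?I) \<in> carrier L" by (rule lim_closed[OF cl0 cI])
  have "\<psi> (lim' (circ fr II JJ L' lim' F)) \<subseteq> \<psi> (\<phi> (lim (circ fr II JJ L lim ?I)))"
    using Chom_mono[OF pt_hom[OF psi] lim_closed[OF cl0' cF] Chom_fun[OF phC c2] m] by simp
  then have "\<psi> (\<phi> (lim (circ fr II JJ L lim ?I))) = UNIV" using v by auto
  then have "pt_map fr II JJ L lim L' lim' \<phi> \<psi> \<in> bullet fr II JJ L lim (lim (circ fr II JJ L lim ?I))"
    using ptmap_bullet[OF psi c2] by simp
  then show "pt_conv fr II JJ L lim ?I (pt_map fr II JJ L lim L' lim' \<phi> \<psi>)"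
    unfolding pt_conv_def using I by simp
qed

lemma part5b:
  "\<forall>l\<in>carrier L. pow_map (pt fr II JJ L' lim') (pt fr II JJ L lim) (pt_map fr II JJ L lim L' lim' \<phi>)
          (counit fr II JJ L lim l) = counit fr II JJ L' lim' (\<phi> l)"
proof
  fix l assume l: "l \<in> carrier L"
  have "bullet fr II JJ L lim l \<subseteq> pt fr II JJ L lim" by (rule bullet_sub)
  then show "pow_map (pt fr II JJ L' lim') (pt fr II JJ L lim) (pt_map fr II JJ L lim L' lim' \<phi>)
          (counit fr II JJ L lim l) = counit fr II JJ L' lim' (\<phi> l)"
    using l Chom_fun[OF phC l] ptmap_pre[OF l] by (simp add: counit_def pow_map_def)
qed

end


lemma part6a:
  assumes Lo: "C_obj fr L" and cl0: "conv_lim L lim"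
  shows "Cconv_hom fr II JJ L lim (PowL (pt fr II JJ L lim)) (pow_lim (pt fr II JJ L lim) (pt_conv fr II JJ L lim))
        (counit fr II JJ L lim)"
  unfolding Cconv_hom_def
proof (intro conjI allI impI)
  have cl: "complete_lattice L" using Lo by (rule Cobj_cl)
  show "C_hom fr II JJ L (PowL (pt fr II JJ L lim)) (counit fr II JJ L lim)" by (rule counit_hom[OF cl])
  fix F assume F: "set_filter (pt fr II JJ L lim) F"
  have c: "lim (circ fr II JJ L lim F) \<in> carrier L" by (rule lim_closed[OF cl0 circ_filter[OF cl F]])
  have "pow_lim (pt fr II JJ L lim) (pt_conv fr II JJ L lim) F \<subseteq> bullet fr II JJ L lim (lim (circ fr II JJ L lim F))"
    by (auto simp: pow_lim_def pt_conv_def)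
  then show "pow_lim (pt fr II JJ L lim) (pt_conv fr II JJ L lim) F \<sqsubseteq>\<^bsub>PowL (pt fr II JJ L lim)\<^esub>
      counit fr II JJ L lim (lim {l \<in> carrier L. counit fr II JJ L lim l \<in> F})"
    unfolding circ_eq[symmetric] using c by (simp add: counit_def)
qed

lemma part6b:
  assumes Lo: "C_obj fr L" and cl0: "conv_lim L lim" and X: "conv_space X cvX"
    and ph: "Cconv_hom fr II JJ L lim (PowL X) (pow_lim X cvX) \<phi>"
  shows "\<exists>!f. continuous_conv X cvX (pt fr II JJ L lim) (pt_conv fr II JJ L lim) f \<and>
               (\<forall>l\<in>carrier L. \<phi> l = pow_map X (pt fr II JJ L lim) f (counit fr II JJ L lim l))"
proof -
  have cl: "complete_lattice L" using Lo by (rule Cobj_cl)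
  have C: "C_hom fr II JJ L (PowL X) \<phi>" using ph by (simp add: Cconv_hom_def)
  have phlim: "pow_lim X cvX G \<subseteq> \<phi> (lim {l \<in> carrier L. \<phi> l \<in> G})" if "set_filter X G" for G
    using ph that by (simp add: Cconv_hom_def)
  have pE: "\<phi> \<in> carrier L \<rightarrow>\<^sub>E Pow X" using C by (simp add: C_hom_def)
  then have req: "(\<lambda>l\<in>carrier L. \<phi> l) = \<phi>" by (auto simp: extensional_restrict)
  have pX: "\<phi> l \<subseteq> X" if "l \<in> carrier L" for l using pE that by auto
  have "\<phi> \<in> carrier L \<rightarrow> Pow X" using pE by auto
  then have "C_hom fr II JJ L (PowL X) (\<lambda>l\<in>carrier L. \<phi> l) \<longleftrightarrow> (\<forall>x\<in>X. PW fr II JJ L \<phi> x)"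
    by (rule pw_pow[OF cl])
  then have PWx: "\<forall>x\<in>X. PW fr II JJ L \<phi> x" using C unfolding req by simp
  have X2: "\<forall>x\<in>X. cvX {S. S \<subseteq> X \<and> x \<in> S} x"
    and X3: "\<And>F G x. cvX F x \<Longrightarrow> set_filter X G \<Longrightarrow> F \<subseteq> G \<Longrightarrow> cvX G x"
    using X unfolding conv_space_def by blast+
  define f where "f x = (if x \<in> X then (\<lambda>l\<in>carrier L. ev x (\<phi> l)) else undefined)" for x
  let ?pt = "pt fr II JJ L lim"
  have fpt: "f x \<in> ?pt" if x: "x \<in> X" for x
    unfolding pt_mem
  proof (intro conjI allI impI)
    show "C_hom fr II JJ L (PowL (UNIV::unit set)) (f x)"
      using pw_one[OF cl, of fr II JJ x \<phi>] PWx x by (simp add: f_def)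
    fix F assume F: "lat_filter (PowL (UNIV::unit set)) F"
    have UF: "UNIV \<in> F" by (rule P1_filter_UNIV[OF F])
    let ?G = "{B. B \<subseteq> X \<and> ev x B \<in> F}"
    have G: "set_filter X ?G"
      unfolding lat_filter_def
    proof (intro conjI ballI impI)
      show "?G \<subseteq> carrier (PowL X)" by auto
      show "?G \<noteq> {}" using x UF by (auto simp: ev_def)
      fix a b assume a: "a \<in> ?G"
      { assume "b \<in> carrier (PowL X)" "a \<sqsubseteq>\<^bsub>PowL X\<^esub> b"
        then show "b \<in> ?G" using a UF by (auto simp: ev_def split: if_splits) }
      { assume b: "b \<in> ?G"
        have "ev x a \<sqinter>\<^bsub>PowL (UNIV::unit set)\<^esub> ev x b \<in> F" using F a b unfolding lat_filter_def by blast
        moreover have "a \<inter> b \<subseteq> X" using a by auto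
        ultimately show "a \<sqinter>\<^bsub>PowL X\<^esub> b \<in> ?G" using a b by (simp add: PowL_meet) }
    qed
    have sub: "{S. S \<subseteq> X \<and> x \<in> S} \<subseteq> ?G" using UF by (auto simp: ev_def)
    have "cvX {S. S \<subseteq> X \<and> x \<in> S} x" using X2 x by blast
    then have "cvX ?G x" using X3 G sub by blast
    then have "x \<in> pow_lim X cvX ?G" using x by (simp add: pow_lim_def)
    then have xin: "x \<in> \<phi> (lim {l \<in> carrier L. \<phi> l \<in> ?G})" using phlim[OF G] by blast
    have seq: "{l \<in> carrier L. \<phi> l \<in> ?G} = {l \<in> carrier L. f x l \<in> F}"
    proof (rule Collect_cong)
      fix l show "(l \<in> carrier L \<and> \<phi> l \<in> ?G) \<longleftrightarrow> (l \<in> carrier L \<and> f x l \<in> F)"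
      proof (cases "l \<in> carrier L")
        case True then show ?thesis using pX[OF True] x by (simp add: f_def)
      qed simp
    qed
    have "lat_filter L {l \<in> carrier L. \<phi> l \<in> ?G}" by (rule preimage_filter[OF cl PowL_cl C G])
    then have "lim {l \<in> carrier L. \<phi> l \<in> ?G} \<in> carrier L" by (rule lim_closed[OF cl0])
    then have "f x (lim {l \<in> carrier L. \<phi> l \<in> ?G}) = UNIV" using xin x by (simp add: f_def)
    then show "f x (lim {l \<in> carrier L. f x l \<in> F}) = UNIV" unfolding seq .
  qed
  have fb: "f x \<in> bullet fr II JJ L lim l \<longleftrightarrow> x \<in> \<phi> l" if "x \<in> X" "l \<in> carrier L" for x l
    using fpt[OF that(1)] that by (simp add: bullet_mem f_def)
  have fE: "f \<in> X \<rightarrow>\<^sub>E ?pt"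
  proof (rule PiE_I)
    fix x assume "x \<in> X" then show "f x \<in> ?pt" by (rule fpt)
  next
    fix x assume "x \<notin> X" then show "f x = undefined" by (simp add: f_def)
  qed
  have eqn: "\<forall>l\<in>carrier L. \<phi> l = pow_map X ?pt f (counit fr II JJ L lim l)"
  proof
    fix l assume l: "l \<in> carrier L"
    have "bullet fr II JJ L lim l \<subseteq> ?pt" by (rule bullet_sub)
    then have "pow_map X ?pt f (counit fr II JJ L lim l) = {x \<in> X. f x \<in> bullet fr II JJ L lim l}"
      using l by (simp add: pow_map_def counit_def)
    also have "\<dots> = \<phi> l" using fb l pX[OF l] by auto
    finally show "\<phi> l = pow_map X ?pt f (counit fr II JJ L lim l)" by simp
  qed
  have cont: "continuous_conv X cvX ?pt (pt_conv fr II JJ L lim) f"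
    unfolding continuous_conv_def
  proof (intro conjI allI impI)
    show "f \<in> X \<rightarrow>\<^sub>E ?pt" by (rule fE)
    fix F x assume cv: "cvX F x"
    have F: "set_filter X F" and x: "x \<in> X" using X cv unfolding conv_space_def by blast+
    let ?I = "img_filter X ?pt f F"
    have I: "set_filter ?pt ?I" by (rule img_set_filter[OF _ F]) (use fE in auto)
    have ceq: "circ fr II JJ L lim ?I = {l \<in> carrier L. \<phi> l \<in> F}"
      unfolding circ_def img_filter_def
    proof (rule Collect_cong)
      fix l
      show "(l \<in> carrier L \<and> bullet fr II JJ L lim l \<in> {B. B \<subseteq> ?pt \<and> {x \<in> X. f x \<in> B} \<in> F}) \<longleftrightarrow>
        (l \<in> carrier L \<and> \<phi> l \<in> F)"
      proof (cases "l \<in> carrier L")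
        case True
        have "{x \<in> X. f x \<in> bullet fr II JJ L lim l} = \<phi> l" using fb True pX[OF True] by auto
        then show ?thesis using True bullet_sub[of fr II JJ L lim l] by auto
      qed simp
    qed
    have H: "lat_filter L {l \<in> carrier L. \<phi> l \<in> F}" by (rule preimage_filter[OF cl PowL_cl C F])
    have "x \<in> \<phi> (lim {l \<in> carrier L. \<phi> l \<in> F})" using phlim[OF F] cv x by (auto simp: pow_lim_def)
    then have "f x \<in> bullet fr II JJ L lim (lim (circ fr II JJ L lim ?I))"
      unfolding ceq using fb[OF x lim_closed[OF cl0 H]] by simp
    then show "pt_conv fr II JJ L lim ?I (f x)" unfolding pt_conv_def using I by simp
  qed
  show ?thesis
  proof (rule ex1I[of _ f])
    show "continuous_conv X cvX ?pt (pt_conv fr II JJ L lim) f \<and>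
      (\<forall>l\<in>carrier L. \<phi> l = pow_map X ?pt f (counit fr II JJ L lim l))" using cont eqn by blast
  next
    fix g assume g: "continuous_conv X cvX ?pt (pt_conv fr II JJ L lim) g \<and>
      (\<forall>l\<in>carrier L. \<phi> l = pow_map X ?pt g (counit fr II JJ L lim l))"
    then have gE: "g \<in> X \<rightarrow>\<^sub>E ?pt" by (simp add: continuous_conv_def)
    have gb: "g x \<in> bullet fr II JJ L lim l \<longleftrightarrow> x \<in> \<phi> l" if x: "x \<in> X" and l: "l \<in> carrier L" for x l
    proof -
      have "bullet fr II JJ L lim l \<subseteq> ?pt" by (rule bullet_sub)
      then have "pow_map X ?pt g (counit fr II JJ L lim l) = {x \<in> X. g x \<in> bullet fr II JJ L lim l}"
        using l by (simp add: pow_map_def counit_def)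
      then show ?thesis using g l x by auto
    qed
    show "g = f"
    proof
      fix x show "g x = f x"
      proof (cases "x \<in> X")
        case True
        have gx: "g x \<in> ?pt" using gE True by auto
        show ?thesis
        proof
          fix l show "g x l = f x l"
          proof (cases "l \<in> carrier L")
            case True
            then show ?thesis using gb[OF \<open>x \<in> X\<close> True] gx \<open>x \<in> X\<close> unit_set_cases[of "g x l"]
              by (auto simp: bullet_mem f_def ev_def)
          next
            case False
            then show ?thesis using Chom_ext[OF pt_hom[OF gx] False] \<open>x \<in> X\<close> by (simp add: f_def)
          qed
        qed
      next
        case False
        show ?thesis using PiE_arb[OF gE False] False by (simp add: f_def)
      qed
    qed
  qed
qed

theorem mainTheorem2:
  fixes fr :: bool and II :: "'i set set" and JJ :: "'j set set"
  shows
  "\<comment> \<open>P is a functor Conv \<rightarrow> (C^conv)^op\<close>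
   (\<forall>(X :: 'x set) cvX. conv_space X cvX \<longrightarrow>
      C_obj fr (PowL X) \<and> conv_lim (PowL X) (pow_lim X cvX)) \<and>
   (\<forall>(X :: 'x set) cvX (Y :: 'y set) cvY f. conv_space X cvX \<and> conv_space Y cvY \<and>
      continuous_conv X cvX Y cvY f \<longrightarrow>
      Cconv_hom fr II JJ (PowL Y) (pow_lim Y cvY) (PowL X) (pow_lim X cvX) (pow_map X Y f)) \<and>
   \<comment> \<open>P is fully faithful\<close>
   (\<forall>(X :: 'x set) cvX (Y :: 'y set) cvY. conv_space X cvX \<and> conv_space Y cvY \<longrightarrow>
      bij_betw (pow_map X Y) {f. continuous_conv X cvX Y cvY f}
        {\<phi>. Cconv_hom fr II JJ (PowL Y) (pow_lim Y cvY) (PowL X) (pow_lim X cvX) \<phi>}) \<and>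
   \<comment> \<open>pt is a functor (C^conv)^op \<rightarrow> Conv\<close>
   (\<forall>(L :: 'a gorder) lim. C_obj fr L \<and> conv_lim L lim \<longrightarrow>
      conv_space (pt fr II JJ L lim) (pt_conv fr II JJ L lim)) \<and>
   (\<forall>(L :: 'a gorder) lim (L' :: 'b gorder) lim' \<phi>.
      C_obj fr L \<and> conv_lim L lim \<and> C_obj fr L' \<and> conv_lim L' lim' \<and>
      Cconv_hom fr II JJ L lim L' lim' \<phi> \<longrightarrow>
      continuous_conv (pt fr II JJ L' lim') (pt_conv fr II JJ L' lim') (pt fr II JJ L lim) (pt_conv fr II JJ L lim)
        (pt_map fr II JJ L lim L' lim' \<phi>) \<and>
      \<comment> \<open>naturality of the counit\<close>
      (\<forall>l\<in>carrier L. pow_map (pt fr II JJ L' lim') (pt fr II JJ L lim) (pt_map fr II JJ L lim L' lim' \<phi>)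
          (counit fr II JJ L lim l) = counit fr II JJ L' lim' (\<phi> l))) \<and>
   \<comment> \<open>pt is right adjoint to P, with counit l \<mapsto> l-bullet\<close>
   (\<forall>(L :: 'a gorder) lim. C_obj fr L \<and> conv_lim L lim \<longrightarrow>
      Cconv_hom fr II JJ L lim (PowL (pt fr II JJ L lim)) (pow_lim (pt fr II JJ L lim) (pt_conv fr II JJ L lim))
        (counit fr II JJ L lim) \<and>
      (\<forall>(X :: 'x set) cvX \<phi>. conv_space X cvX \<and>
         Cconv_hom fr II JJ L lim (PowL X) (pow_lim X cvX) \<phi> \<longrightarrow>
         (\<exists>!f. continuous_conv X cvX (pt fr II JJ L lim) (pt_conv fr II JJ L lim) f \<and>
               (\<forall>l\<in>carrier L. \<phi> l = pow_map X (pt fr II JJ L lim) f (counit fr II JJ L lim l)))))"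
    apply (intro conjI allI impI)
  subgoal by (simp add: PowL_Cobj)
  subgoal by (blast dest: part1)
  subgoal by (blast intro: part2)
  subgoal by (blast intro: part3)
  subgoal by (blast intro: part4)
  subgoal by (blast intro: part5a)
  subgoal by (elim conjE) (rule part5b)
  subgoal by (blast intro: part6a)
  subgoal by (elim conjE) (rule part6b)
  done

end
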